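(* For $k=1,2$ let $\mathcal{N}_k:\mathcal{L}(\mathcal{H}_{A_k})\to\mathcal{L}(\mathcal{H}_{B_k})$ be a quantum channel with $\dim\mathcal{H}_{A_k}=\dim\mathcal{H}_{B_k}=d_k$. For a channel $\mathcal{N}:\mathcal{L}(\mathcal{H}_A)\to\mathcal{L}(\mathcal{H}_B)$ with $\dim\mathcal{H}_A=\dim\mathcal{H}_B=d$, define $$\mathcal{O}(\mathcal{N})=\max_{\rho_{RA}}F\big((\mathcal{I}_R\otimes\mathcal{N})(\rho_{RA}),\phi_{RB}\big),$$ where $\mathcal{H}_R$ is a $d$-dimensional reference space, the maximum is over all density operators $\rho_{RA}$ on $\mathcal{H}_R\otimes\mathcal{H}_A$, $\phi_{RB}$ is the projector onto the maximally entangled state $\frac1{\sqrt d}\sum_j|j\rangle_R|j\rangle_B$ (fixed orthonormal bases), and $F(\rho,\sigma)=\|\sqrt\rho\sqrt\sigma\|_1$. Then, with $\mathcal{N}_1\otimes\mathcal{N}_2:\mathcal{L}(\mathcal{H}_{A_1}\otimes\mathcal{H}_{A_2})\to\mathcal{L}(\mathcal{H}_{B_1}\otimes\mathcal{H}_{B_2})$ (of input/output dimension $d_1d_2$), $$\mathcal{O}(\mathcal{N}_1\otimes\mathcal{N}_2)=\mathcal{O}(\mathcal{N}_1)\,\mathcal{O}(\mathcal{N}_2).$$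
   Context: $\mathcal{I}_R$ is the identity map on $\mathcal{L}(\mathcal{H}_R)$ and $\|\cdot\|_1$ is the trace norm. For the tensor product channel the reference space is $\mathcal{H}_{R_1}\otimes\mathcal{H}_{R_2}$ and the maximally entangled state is the one across $R_1R_2$ and $B_1B_2$. *)

theory Defs
  imports Complex_Main "Jordan_Normal_Form.Matrix"
begin

text \<open>Complex matrices (Jordan_Normal_Form 'mat'). Bipartite index convention:
  a basis vector |i>|a> of H_X (dim m) tensor H_Y (dim n) has index i*n + a.\<close>

definition mtrace :: "complex mat \<Rightarrow> complex" where
  "mtrace A = (\<Sum>i<dim_row A. A $$ (i, i))"

definition dagger :: "complex mat \<Rightarrow> complex mat" where
  "dagger A = mat (dim_col A) (dim_row A) (\<lambda>(i, j). cnj (A $$ (j, i)))"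

definition psd :: "complex mat \<Rightarrow> bool" where
  "psd A \<longleftrightarrow> A \<in> carrier_mat (dim_row A) (dim_row A) \<and>
     (\<forall>v \<in> carrier_vec (dim_row A).
        let q = (\<Sum>i<dim_row A. cnj (v $ i) * (A *\<^sub>v v) $ i) in Im q = 0 \<and> Re q \<ge> 0)"

definition density :: "nat \<Rightarrow> complex mat \<Rightarrow> bool" where
  "density n \<rho> \<longleftrightarrow> \<rho> \<in> carrier_mat n n \<and> psd \<rho> \<and> mtrace \<rho> = 1"

definition msqrt :: "complex mat \<Rightarrow> complex mat" where
  "msqrt A = (THE B. psd B \<and> dim_row B = dim_row A \<and> B * B = A)"

definition trace_norm :: "complex mat \<Rightarrow> real" where
  "trace_norm X = Re (mtrace (msqrt (dagger X * X)))"

definition fidelity :: "complex mat \<Rightarrow> complex mat \<Rightarrow> real" where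
  "fidelity \<rho> \<sigma> = trace_norm (msqrt \<rho> * msqrt \<sigma>)"

text \<open>(I_R \<otimes> N)(X) for X on H_R (dim n) \<otimes> H_A (dim din): apply N blockwise.\<close>
definition id_tensor :: "nat \<Rightarrow> nat \<Rightarrow> nat \<Rightarrow> (complex mat \<Rightarrow> complex mat) \<Rightarrow> complex mat \<Rightarrow> complex mat" where
  "id_tensor n din dout N X = mat (n * dout) (n * dout) (\<lambda>(r, c).
      N (mat din din (\<lambda>(a, b). X $$ ((r div dout) * din + a, (c div dout) * din + b)))
        $$ (r mod dout, c mod dout))"

definition quantum_channel :: "nat \<Rightarrow> nat \<Rightarrow> (complex mat \<Rightarrow> complex mat) \<Rightarrow> bool" where
  "quantum_channel din dout N \<longleftrightarrow>
     (\<forall>A \<in> carrier_mat din din. N A \<in> carrier_mat dout dout) \<and>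
     (\<forall>A \<in> carrier_mat din din. \<forall>B \<in> carrier_mat din din. N (A + B) = N A + N B) \<and>
     (\<forall>A \<in> carrier_mat din din. \<forall>c. N (c \<cdot>\<^sub>m A) = c \<cdot>\<^sub>m N A) \<and>
     (\<forall>A \<in> carrier_mat din din. mtrace (N A) = mtrace A) \<and>
     (\<forall>n. \<forall>X \<in> carrier_mat (n * din) (n * din). psd X \<longrightarrow> psd (id_tensor n din dout N X))"

text \<open>Projector onto (1/sqrt d) \<Sum>_j |j>_R |j>_B.\<close>
definition maxent :: "nat \<Rightarrow> complex mat" where
  "maxent d = mat (d * d) (d * d) (\<lambda>(r, c).
      if r div d = r mod d \<and> c div d = c mod d then 1 / of_nat d else 0)"

definition opt_fid :: "nat \<Rightarrow> (complex mat \<Rightarrow> complex mat) \<Rightarrow> real" where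
  "opt_fid d N = Sup {fidelity (id_tensor d d d N \<rho>) (maxent d) | \<rho>. density (d * d) \<rho>}"

definition mat_unit :: "nat \<Rightarrow> nat \<Rightarrow> nat \<Rightarrow> complex mat" where
  "mat_unit d i j = mat d d (\<lambda>(a, b). if a = i \<and> b = j then 1 else 0)"

text \<open>N1 \<otimes> N2 on L(H_A1 \<otimes> H_A2), dims d1, d2; X = \<Sum>_{ij} |i><j| \<otimes> X_ij, mapped to
  \<Sum>_{ij} N1(|i><j|) \<otimes> N2(X_ij) (linear extension of the product map).\<close>
definition tensor_channel :: "nat \<Rightarrow> nat \<Rightarrow> (complex mat \<Rightarrow> complex mat) \<Rightarrow> (complex mat \<Rightarrow> complex mat)
     \<Rightarrow> complex mat \<Rightarrow> complex mat" where
  "tensor_channel d1 d2 N1 N2 X = mat (d1 * d2) (d1 * d2) (\<lambda>(r, c).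
      \<Sum>i<d1. \<Sum>j<d1. N1 (mat_unit d1 i j) $$ (r div d2, c div d2) *
         N2 (mat d2 d2 (\<lambda>(a, b). X $$ (i * d2 + a, j * d2 + b))) $$ (r mod d2, c mod d2))"

end

theory Submission
  imports Defs "Jordan_Normal_Form.Schur_Decomposition" "HOL-Computational_Algebra.Fundamental_Theorem_Algebra"
begin


lemma mult_entry:
  assumes "A \<in> carrier_mat n m" "B \<in> carrier_mat m p" "i < n" "j < p"
  shows "(A * B) $$ (i, j) = (\<Sum>k<m. A $$ (i, k) * B $$ (k, j))"
  using assms by (auto simp: scalar_prod_def atLeast0LessThan intro!: sum.cong)

lemma dagger_dims[simp]: "dim_row (dagger A) = dim_col A" "dim_col (dagger A) = dim_row A"
  by (auto simp: dagger_def)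

lemma dagger_carrier[simp]: "A \<in> carrier_mat n m \<Longrightarrow> dagger A \<in> carrier_mat m n"
  by (auto simp: dagger_def)

lemma dagger_index[simp]: "i < dim_col A \<Longrightarrow> j < dim_row A \<Longrightarrow> dagger A $$ (i, j) = cnj (A $$ (j, i))"
  by (auto simp: dagger_def)

lemma dagger_dagger[simp]: "dagger (dagger A) = A"
  by (rule eq_matI) auto

lemma dagger_mult:
  assumes "A \<in> carrier_mat n m" "B \<in> carrier_mat m p"
  shows "dagger (A * B) = dagger B * dagger A"
proof (rule eq_matI)
  fix i j assume ij: "i < dim_row (dagger B * dagger A)" "j < dim_col (dagger B * dagger A)"
  hence i: "i < p" and j: "j < n" using assms by auto
  have "dagger (A * B) $$ (i, j) = cnj ((A * B) $$ (j, i))" using assms i j by auto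
  also have "\<dots> = (\<Sum>k<m. cnj (A $$ (j, k)) * cnj (B $$ (k, i)))"
    using mult_entry[OF assms j i] by simp
  also have "\<dots> = (dagger B * dagger A) $$ (i, j)"
    using assms i j by (subst mult_entry[of _ p m _ n]) (auto intro!: sum.cong)
  finally show "dagger (A * B) $$ (i, j) = (dagger B * dagger A) $$ (i, j)" .
qed (use assms in auto)

lemma dagger_one[simp]: "dagger (1\<^sub>m n) = 1\<^sub>m n"
  by (rule eq_matI) auto

definition unitary :: "nat \<Rightarrow> complex mat \<Rightarrow> bool" where
  "unitary n U \<longleftrightarrow> U \<in> carrier_mat n n \<and> dagger U * U = 1\<^sub>m n \<and> U * dagger U = 1\<^sub>m n"

lemma unitaryI:
  assumes "U \<in> carrier_mat n n" "dagger U * U = 1\<^sub>m n"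
  shows "unitary n U"
  using assms mat_mult_left_right_inverse[of "dagger U" n U] unfolding unitary_def by auto

lemma unitary_mult:
  assumes "unitary n U" "unitary n V"
  shows "unitary n (U * V)"
proof -
  have c: "U \<in> carrier_mat n n" "V \<in> carrier_mat n n" "dagger U \<in> carrier_mat n n" "dagger V \<in> carrier_mat n n"
    using assms unfolding unitary_def by auto
  have e1: "dagger U * U = 1\<^sub>m n" "dagger V * V = 1\<^sub>m n" using assms unfolding unitary_def by auto
  have "dagger (U * V) * (U * V) = (dagger V * dagger U) * (U * V)"
    by (simp add: dagger_mult[OF c(1,2)])
  also have "\<dots> = dagger V * (dagger U * (U * V))"
    by (rule assoc_mult_mat[OF c(4) c(3) mult_carrier_mat[OF c(1,2)]])
  also have "dagger U * (U * V) = (dagger U * U) * V"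
    by (rule assoc_mult_mat[symmetric, OF c(3) c(1) c(2)])
  also have "\<dots> = V" using e1 c by simp
  finally have "dagger (U * V) * (U * V) = 1\<^sub>m n" using e1 by simp
  thus ?thesis using c by (intro unitaryI) auto
qed

definition diagm :: "nat \<Rightarrow> (nat \<Rightarrow> complex) \<Rightarrow> complex mat" where
  "diagm n e = mat n n (\<lambda>(i, j). if i = j then e i else 0)"

lemma diagm_carrier[simp]: "diagm n e \<in> carrier_mat n n" "dim_row (diagm n e) = n" "dim_col (diagm n e) = n"
  by (auto simp: diagm_def)

definition herm :: "nat \<Rightarrow> complex mat \<Rightarrow> bool" where
  "herm n A \<longleftrightarrow> A \<in> carrier_mat n n \<and> dagger A = A"

lemma herm_index: "herm n A \<Longrightarrow> i < n \<Longrightarrow> j < n \<Longrightarrow> A $$ (i, j) = cnj (A $$ (j, i))"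
proof -
  assume h: "herm n A" and ij: "i < n" "j < n"
  hence "A $$ (i, j) = dagger A $$ (i, j)" unfolding herm_def by simp
  also have "\<dots> = cnj (A $$ (j, i))" by (rule dagger_index) (use h ij in \<open>auto simp: herm_def\<close>)
  finally show ?thesis .
qed

lemma hermI: assumes "A \<in> carrier_mat n n" "\<And>i j. i < n \<Longrightarrow> j < n \<Longrightarrow> A $$ (i, j) = cnj (A $$ (j, i))"
  shows "herm n A"
  unfolding herm_def
proof
  show "A \<in> carrier_mat n n" by fact
  show "dagger A = A"
  proof (rule eq_matI)
    fix i j assume "i < dim_row A" "j < dim_col A"
    thus "dagger A $$ (i, j) = A $$ (i, j)" using assms(1) assms(2)[of i j] by simp
  qed (use assms in auto)
qed


lemma cscalar_self:
  "v \<bullet>c v = of_real (\<Sum>i<dim_vec v. (cmod (v $ i))\<^sup>2)"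
  by (simp add: scalar_prod_def atLeast0LessThan of_real_sum complex_norm_square del: of_real_power)

lemma unitary_ext:
  assumes u: "u \<in> carrier_vec n" and u1: "u \<bullet>c u = 1"
  shows "\<exists>U. unitary n U \<and> (\<forall>k<n. U $$ (k, 0) = u $ k)"
proof -
  interpret cof_vec_space n "TYPE(complex)" .
  have u0: "u \<noteq> 0\<^sub>v n" using u1 by auto
  note bc = basis_completion[OF u u0]
  define bs where "bs = basis_completion u"
  have n0: "n > 0" using u0 u by (cases n) auto
  obtain rest where bs_eq: "bs = u # rest" using bc(6,7) n0 unfolding bs_def by (cases "basis_completion u") auto
  define ws where "ws = gram_schmidt n bs"
  note gs = gram_schmidt_result[OF bc(2,4,5)[folded bs_def] ws_def]
  have len: "length ws = n" using gs bc(6) bs_def by simp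
  have wsne: "ws \<noteq> []" using len n0 by auto
  have hd: "ws ! 0 = u" using gram_schmidt_hd[OF u, of rest] bs_eq ws_def hd_conv_nth[OF wsne] by simp
  have wc: "\<And>i. i < n \<Longrightarrow> ws ! i \<in> carrier_vec n" using gs(3) len by auto
  define s where "s i = sqrt (\<Sum>k<n. (cmod (ws ! i $ k))\<^sup>2)" for i
  have ss: "ws ! i \<bullet>c ws ! i = of_real ((s i)\<^sup>2)" if "i < n" for i
    using cscalar_self[of "ws ! i"] wc[OF that] unfolding s_def by (simp add: sum_nonneg)
  have s0: "s i \<noteq> 0" if "i < n" for i
    using corthogonalD[OF gs(2), of i i] len that ss[OF that] by auto
  have "of_real ((s 0)\<^sup>2) = (1::complex)" using ss[OF n0] u1 hd by simp
  hence "(s 0)\<^sup>2 = 1" by (metis of_real_eq_1_iff)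
  moreover have "s 0 \<ge> 0" unfolding s_def by (simp add: sum_nonneg)
  ultimately have s_0: "s 0 = 1" by (simp add: power2_eq_1_iff)
  define U where "U = mat n n (\<lambda>(k, i). ws ! i $ k / of_real (s i))"
  have Uc: "U \<in> carrier_mat n n" unfolding U_def by auto
  have "dagger U * U = 1\<^sub>m n"
  proof (rule eq_matI)
    fix i j assume "i < dim_row (1\<^sub>m n)" "j < dim_col (1\<^sub>m n)"
    hence i: "i < n" and j: "j < n" by auto
    have "(dagger U * U) $$ (i, j) = (\<Sum>k<n. cnj (U $$ (k, i)) * U $$ (k, j))"
      using Uc i j by (subst mult_entry[of _ n n _ n]) auto
    also have "\<dots> = (\<Sum>k<n. ws ! j $ k * cnj (ws ! i $ k)) / (of_real (s i) * of_real (s j))"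
      using i j unfolding U_def by (simp add: sum_divide_distrib mult.commute)
    also have "(\<Sum>k<n. ws ! j $ k * cnj (ws ! i $ k)) = ws ! j \<bullet>c ws ! i"
      using wc[OF i] wc[OF j] by (simp add: scalar_prod_def atLeast0LessThan)
    also have "ws ! j \<bullet>c ws ! i / (of_real (s i) * of_real (s j)) = 1\<^sub>m n $$ (i, j)"
    proof (cases "i = j")
      case True
      then show ?thesis using ss[OF i] s0[OF i] i by (simp add: power2_eq_square)
    next
      case False
      then show ?thesis using corthogonalD[OF gs(2), of j i] len i j by auto
    qed
    finally show "(dagger U * U) $$ (i, j) = 1\<^sub>m n $$ (i, j)" .
  qed (use Uc in auto)
  hence "unitary n U" using Uc by (rule unitaryI[rotated])
  moreover have "\<forall>k<n. U $$ (k, 0) = u $ k" using hd s_0 n0 unfolding U_def by auto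
  ultimately show ?thesis by blast
qed


lemma mult_diagm:
  assumes "M \<in> carrier_mat k n" "i < k" "j < n"
  shows "(M * diagm n e) $$ (i, j) = M $$ (i, j) * e j"
proof -
  have "(M * diagm n e) $$ (i, j) = (\<Sum>l<n. M $$ (i, l) * diagm n e $$ (l, j))"
    using assms by (subst mult_entry[of _ k n _ n]) auto
  also have "\<dots> = (\<Sum>l<n. if l = j then M $$ (i, j) * e j else 0)"
    using assms by (intro sum.cong) (auto simp: diagm_def)
  finally show ?thesis using assms by simp
qed

lemma herm_congr:
  assumes "herm n A" "V \<in> carrier_mat n k"
  shows "herm k (dagger V * A * V)"
proof -
  have A: "A \<in> carrier_mat n n" "dagger A = A" using assms unfolding herm_def by auto
  have "dagger (dagger V * A * V) = dagger V * dagger (dagger V * A)"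
    using assms A by (subst dagger_mult[of _ k n _ k]) auto
  also have "dagger (dagger V * A) = dagger A * V"
    using assms A by (subst dagger_mult[of _ k n _ n]) auto
  finally have "dagger (dagger V * A * V) = dagger V * A * V" using A assms
    by (simp add: assoc_mult_mat[OF dagger_carrier[OF assms(2)] A(1) assms(2)])
  thus ?thesis using assms A unfolding herm_def by auto
qed

theorem spectral:
  "herm n A \<Longrightarrow> \<exists>U e. unitary n U \<and> A * U = U * diagm n (\<lambda>i. of_real (e i))"
proof (induction n arbitrary: A)
  case 0
  have "A * 1\<^sub>m 0 = 1\<^sub>m 0 * diagm 0 (\<lambda>i. of_real 0)"
    using 0 unfolding herm_def by (intro eq_matI) auto
  moreover have "unitary 0 (1\<^sub>m 0)" unfolding unitary_def by auto
  ultimately show ?case by (intro exI[of _ "1\<^sub>m 0"] exI[of _ "\<lambda>i::nat. 0::real"]) simp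
next
  case (Suc m A)
  define n where "n = Suc m"
  have Ac: "A \<in> carrier_mat n n" using Suc.prems unfolding herm_def n_def by auto
  have "degree (char_poly A) = n" using degree_monic_char_poly[OF Ac] by simp
  hence "\<not> constant (poly (char_poly A))" unfolding constant_degree n_def by simp
  then obtain lam where "poly (char_poly A) lam = 0" using fundamental_theorem_of_algebra by blast
  hence "eigenvalue A lam" using eigenvalue_root_char_poly[OF Ac] by simp
  hence "eigenvector A (find_eigenvector A lam) lam" by (rule find_eigenvector[OF Ac])
  then obtain v where v: "v \<in> carrier_vec n" "v \<noteq> 0\<^sub>v n" "A *\<^sub>v v = lam \<cdot>\<^sub>v v"
    unfolding eigenvector_def using Ac by auto
  define r where "r = sqrt (\<Sum>k<n. (cmod (v $ k))\<^sup>2)"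
  have "v \<bullet>c v \<noteq> 0" using v conjugate_square_eq_0_vec by blast
  moreover have "v \<bullet>c v = of_real (\<Sum>k<n. (cmod (v $ k))\<^sup>2)" using cscalar_self[of v] v(1) by (simp only: carrier_vecD)
  ultimately have "(\<Sum>k<n. (cmod (v $ k))\<^sup>2) \<noteq> 0" by (metis of_real_0)
  hence r0: "r > 0" unfolding r_def by (simp add: sum_nonneg order_le_neq_trans)
  define u where "u = (1 / of_real r) \<cdot>\<^sub>v v"
  have uc: "u \<in> carrier_vec n" using v unfolding u_def by auto
  have "u \<bullet>c u = of_real (\<Sum>k<n. (cmod (v $ k))\<^sup>2 / r\<^sup>2)"
    using cscalar_self[of u] uc v unfolding u_def
    by (simp add: norm_divide power_divide)
  also have "\<dots> = 1" using r0 unfolding r_def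
    by (simp add: sum_divide_distrib[symmetric] sum_nonneg)
  finally obtain U1 where U1: "unitary n U1" "\<And>k. k < n \<Longrightarrow> U1 $$ (k, 0) = u $ k"
    using unitary_ext[OF uc] by blast
  have U1c: "U1 \<in> carrier_mat n n" "dagger U1 \<in> carrier_mat n n" using U1 unfolding unitary_def by auto
  have Au: "(\<Sum>l<n. A $$ (k, l) * u $ l) = lam * u $ k" if "k < n" for k
  proof -
    have "(A *\<^sub>v u) $ k = lam * u $ k" using v that Ac unfolding u_def
      by (simp add: mult_mat_vec)
    thus ?thesis using that Ac uc by (simp add: scalar_prod_def atLeast0LessThan row_def)
  qed
  define A' where "A' = dagger U1 * A * U1"
  have A'c: "A' \<in> carrier_mat n n" unfolding A'_def using U1c Ac by auto
  have hA': "herm n A'" unfolding A'_def by (rule herm_congr[OF Suc.prems[folded n_def] U1c(1)])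
  have AU1: "(A * U1) $$ (k, 0) = lam * U1 $$ (k, 0)" if "k < n" for k
    using Au[OF that] that U1 Ac U1c by (subst mult_entry[of _ n n _ n]) (auto simp: n_def)
  have col0: "A' $$ (i, 0) = (if i = 0 then lam else 0)" if "i < n" for i
  proof -
    have "A' $$ (i, 0) = (\<Sum>k<n. dagger U1 $$ (i, k) * (A * U1) $$ (k, 0))"
    proof -
      have "A' = dagger U1 * (A * U1)" unfolding A'_def by (rule assoc_mult_mat[OF U1c(2) Ac U1c(1)])
      moreover have "A * U1 \<in> carrier_mat n n" using U1c Ac by simp
      ultimately show ?thesis using mult_entry[OF U1c(2) _ that, of "A * U1" n 0] by (simp add: n_def)
    qed
    also have "\<dots> = lam * (\<Sum>k<n. dagger U1 $$ (i, k) * U1 $$ (k, 0))"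
      by (simp add: AU1 sum_distrib_left mult.assoc mult.left_commute)
    also have "(\<Sum>k<n. dagger U1 $$ (i, k) * U1 $$ (k, 0)) = (dagger U1 * U1) $$ (i, 0)"
      using U1c that by (subst mult_entry[of _ n n _ n]) (auto simp: n_def)
    also have "\<dots> = (if i = 0 then 1 else 0)" using U1 that unfolding unitary_def by (auto simp: n_def)
    finally show ?thesis by simp
  qed
  have lam_real: "lam = of_real (Re lam)"
    using herm_index[OF hA', of 0 0] col0[of 0] by (simp add: n_def complex_eq_iff)
  have row0: "A' $$ (0, j) = (if j = 0 then lam else 0)" if "j < n" for j
    using herm_index[OF hA', of 0 j] col0[OF that] that lam_real by (auto simp: n_def)
  define A3 where "A3 = mat m m (\<lambda>(i, j). A' $$ (Suc i, Suc j))"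
  have hA3: "herm m A3" unfolding A3_def
  proof (rule hermI)
    fix i j assume "i < m" "j < m"
    thus "mat m m (\<lambda>(i, j). A' $$ (Suc i, Suc j)) $$ (i, j) = cnj (mat m m (\<lambda>(i, j). A' $$ (Suc i, Suc j)) $$ (j, i))"
      using herm_index[OF hA', of "Suc i" "Suc j"] by (simp add: n_def)
  qed auto
  from Suc.IH[OF hA3] obtain V3 e3 where V3: "unitary m V3" "A3 * V3 = V3 * diagm m (\<lambda>i. of_real (e3 i))"
    by blast
  have V3c: "V3 \<in> carrier_mat m m" "dagger V3 \<in> carrier_mat m m" using V3 unfolding unitary_def by auto
  define W where "W = mat n n (\<lambda>(i, j). if i = 0 then (if j = 0 then 1 else 0) else if j = 0 then 0 else V3 $$ (i - 1, j - 1))"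
  have Wc: "W \<in> carrier_mat n n" unfolding W_def by auto
  have "dagger W * W = 1\<^sub>m n"
  proof (rule eq_matI)
    fix i j assume "i < dim_row (1\<^sub>m n)" "j < dim_col (1\<^sub>m n)"
    hence i: "i < n" and j: "j < n" by auto
    have "(dagger W * W) $$ (i, j) = (\<Sum>k<Suc m. cnj (W $$ (k, i)) * W $$ (k, j))"
      using Wc i j by (subst mult_entry[of _ n n _ n]) (auto simp: n_def)
    also have "\<dots> = cnj (W $$ (0, i)) * W $$ (0, j) + (\<Sum>k<m. cnj (W $$ (Suc k, i)) * W $$ (Suc k, j))"
      by (rule sum.lessThan_Suc_shift)
    also have "\<dots> = 1\<^sub>m n $$ (i, j)"
    proof (cases i)
      case 0
      then show ?thesis using i j unfolding W_def by (auto simp: n_def)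
    next
      case (Suc i')
      show ?thesis
      proof (cases j)
        case 0
        then show ?thesis using i j Suc unfolding W_def by (auto simp: n_def)
      next
        case (Suc j')
        have "(\<Sum>k<m. cnj (W $$ (Suc k, i)) * W $$ (Suc k, j)) = (\<Sum>k<m. cnj (V3 $$ (k, i')) * V3 $$ (k, j'))"
          using i j `i = Suc i'` Suc unfolding W_def by (auto simp: n_def)
        also have "\<dots> = (dagger V3 * V3) $$ (i', j')"
          using V3c i j `i = Suc i'` Suc by (subst mult_entry[of _ m m _ m]) (auto simp: n_def)
        also have "\<dots> = (if i' = j' then 1 else 0)" using V3 i j `i = Suc i'` Suc unfolding unitary_def by (auto simp: n_def)
        finally show ?thesis using i j `i = Suc i'` Suc unfolding W_def by (auto simp: n_def)
      qed
    qed
    finally show "(dagger W * W) $$ (i, j) = 1\<^sub>m n $$ (i, j)" .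
  qed (use Wc in auto)
  hence uW: "unitary n W" using Wc by (rule unitaryI[rotated])
  define e where "e i = (if i = 0 then Re lam else e3 (i - 1))" for i
  have A'W: "A' * W = W * diagm n (\<lambda>i. of_real (e i))"
  proof (rule eq_matI)
    fix i j assume "i < dim_row (W * diagm n (\<lambda>i. of_real (e i)))" "j < dim_col (W * diagm n (\<lambda>i. of_real (e i)))"
    hence i: "i < n" and j: "j < n" using Wc by auto
    have R: "(W * diagm n (\<lambda>i. of_real (e i))) $$ (i, j) = W $$ (i, j) * of_real (e j)"
      by (rule mult_diagm[OF Wc i j])
    have "(A' * W) $$ (i, j) = (\<Sum>k<Suc m. A' $$ (i, k) * W $$ (k, j))"
      using Wc A'c i j by (subst mult_entry[of _ n n _ n]) (auto simp: n_def)
    also have "\<dots> = A' $$ (i, 0) * W $$ (0, j) + (\<Sum>k<m. A' $$ (i, Suc k) * W $$ (Suc k, j))"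
      by (rule sum.lessThan_Suc_shift)
    also have "\<dots> = W $$ (i, j) * of_real (e j)"
    proof (cases i)
      case 0
      then show ?thesis using i j row0 col0 lam_real unfolding W_def e_def by (auto simp: n_def)
    next
      case (Suc i')
      show ?thesis
      proof (cases j)
        case 0
        then show ?thesis using i j Suc col0 unfolding W_def by (auto simp: n_def)
      next
        case (Suc j')
        have "(\<Sum>k<m. A' $$ (i, Suc k) * W $$ (Suc k, j)) = (\<Sum>k<m. A3 $$ (i', k) * V3 $$ (k, j'))"
          using i j `i = Suc i'` Suc unfolding W_def A3_def by (auto simp: n_def)
        also have "\<dots> = (A3 * V3) $$ (i', j')"
          using V3c i j `i = Suc i'` Suc by (subst mult_entry[of _ m m _ m]) (auto simp: n_def A3_def)
        also have "\<dots> = V3 $$ (i', j') * of_real (e3 j')" unfolding V3(2)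
          using V3c i j `i = Suc i'` Suc by (subst mult_diagm[of _ m]) (auto simp: n_def)
        finally show ?thesis using i j `i = Suc i'` Suc col0 unfolding W_def e_def by (auto simp: n_def)
      qed
    qed
    finally show "(A' * W) $$ (i, j) = (W * diagm n (\<lambda>i. of_real (e i))) $$ (i, j)" using R by simp
  qed (use Wc A'c in auto)
  define U where "U = U1 * W"
  have uU: "unitary n U" unfolding U_def by (rule unitary_mult[OF U1(1) uW])
  have "U1 * A' = A * U1"
  proof -
    have AU1c: "A * U1 \<in> carrier_mat n n" using Ac U1c by simp
    have "U1 * A' = (U1 * dagger U1) * (A * U1)" unfolding A'_def
      by (simp only: assoc_mult_mat[OF U1c(2) Ac U1c(1)] assoc_mult_mat[OF U1c(1) U1c(2) AU1c])
    also have "\<dots> = A * U1" using U1 Ac U1c unfolding unitary_def by simp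
    finally show ?thesis .
  qed
  hence "A * U = U1 * (A' * W)" unfolding U_def
    by (simp only: assoc_mult_mat[OF Ac U1c(1) Wc, symmetric] assoc_mult_mat[OF U1c(1) A'c Wc, symmetric])
  also have "\<dots> = U * diagm n (\<lambda>i. of_real (e i))" unfolding A'W U_def
    by (rule assoc_mult_mat[symmetric, OF U1c(1) Wc diagm_carrier(1)])
  finally show ?case using uU unfolding n_def by blast
qed


definition qf :: "nat \<Rightarrow> complex mat \<Rightarrow> (nat \<Rightarrow> complex) \<Rightarrow> complex" where
  "qf n A f = (\<Sum>i<n. cnj (f i) * (\<Sum>j<n. A $$ (i, j) * f j))"

lemma psd_qf_vec:
  assumes "A \<in> carrier_mat n n"
  shows "(\<Sum>i<dim_row A. cnj (vec n f $ i) * (A *\<^sub>v vec n f) $ i) = qf n A f"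
  using assms unfolding qf_def
  by (auto simp: scalar_prod_def atLeast0LessThan row_def intro!: sum.cong)

lemma psd_qf:
  assumes "psd A" "A \<in> carrier_mat n n"
  shows "Im (qf n A f) = 0" "Re (qf n A f) \<ge> 0"
proof -
  have "vec n f \<in> carrier_vec (dim_row A)" using assms by auto
  hence "Im (qf n A f) = 0 \<and> Re (qf n A f) \<ge> 0"
    using assms(1) psd_qf_vec[OF assms(2), of f] unfolding psd_def Let_def by metis
  thus "Im (qf n A f) = 0" "Re (qf n A f) \<ge> 0" by auto
qed

lemma psdI:
  assumes "A \<in> carrier_mat n n" "\<And>f. Im (qf n A f) = 0 \<and> Re (qf n A f) \<ge> 0"
  shows "psd A"
  unfolding psd_def Let_def
proof (intro conjI ballI)
  show "A \<in> carrier_mat (dim_row A) (dim_row A)" using assms by auto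
  fix v :: "complex vec" assume v: "v \<in> carrier_vec (dim_row A)"
  hence vv: "v = vec n (\<lambda>i. v $ i)" using assms by auto
  show "Im (\<Sum>i<dim_row A. cnj (v $ i) * (A *\<^sub>v v) $ i) = 0"
    "0 \<le> Re (\<Sum>i<dim_row A. cnj (v $ i) * (A *\<^sub>v v) $ i)"
    using assms(2)[of "\<lambda>i. v $ i"] psd_qf_vec[OF assms(1), of "\<lambda>i. v $ i"] vv by metis+
qed

lemma psd_carrier: "psd A \<Longrightarrow> A \<in> carrier_mat (dim_row A) (dim_row A)"
  unfolding psd_def by auto

lemma sum_delta_mult[simp]:
  fixes c :: complex and i n :: nat
  assumes "i < n"
  shows "(\<Sum>x<n. (if x = i then c else 0) * g x) = c * g i"
proof -
  have "(\<Sum>x<n. (if x = i then c else 0) * g x) = (\<Sum>x<n. if x = i then c * g i else 0)"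
    by (intro sum.cong) auto
  also have "\<dots> = c * g i" using assms by (subst sum.delta) auto
  finally show ?thesis .
qed

lemma sum_delta_mult2[simp]:
  fixes c :: complex and i n :: nat
  assumes "i < n"
  shows "(\<Sum>x<n. g x * (if x = i then c else 0)) = g i * c"
  using sum_delta_mult[OF assms, of c g] by (simp add: mult.commute)

lemma cnj_if0: "cnj (if P then a else 0) = (if P then cnj a else 0)" by simp

lemma qf_two:
  assumes "i < n" "j < n"
  shows "qf n A (\<lambda>k. (if k = i then a else 0) + (if k = j then b else 0)) =
    cnj a * (a * A $$ (i, i) + b * A $$ (i, j)) + cnj b * (a * A $$ (j, i) + b * A $$ (j, j))"
proof -
  have inner: "(\<Sum>y<n. A $$ (x, y) * ((if y = i then a else 0) + (if y = j then b else 0)))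
      = a * A $$ (x, i) + b * A $$ (x, j)" for x
  proof -
    have "(\<Sum>y<n. A $$ (x, y) * ((if y = i then a else 0) + (if y = j then b else 0)))
       = (\<Sum>y<n. (if y = i then a else 0) * A $$ (x, y)) + (\<Sum>y<n. (if y = j then b else 0) * A $$ (x, y))"
      by (simp add: distrib_left sum.distrib mult.commute)
    thus ?thesis using assms by (simp add: mult.commute)
  qed
  show ?thesis unfolding qf_def inner
    using assms by (simp only: cnj_if0 complex_cnj_add distrib_right sum.distrib sum_delta_mult)
qed

lemma psd_herm:
  assumes "psd A" "A \<in> carrier_mat n n"
  shows "herm n A"
proof (rule hermI[OF assms(2)])
  fix i j assume ij: "i < n" "j < n"
  note q = psd_qf(1)[OF assms]
  have ii: "Im (A $$ (i, i)) = 0" using q[of "\<lambda>k. (if k = i then 1 else 0) + (if k = j then 0 else 0)"]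
    unfolding qf_two[OF ij] by simp
  have jj: "Im (A $$ (j, j)) = 0" using q[of "\<lambda>k. (if k = i then 0 else 0) + (if k = j then 1 else 0)"]
    unfolding qf_two[OF ij] by simp
  have 1: "Im (A $$ (i, j)) + Im (A $$ (j, i)) = 0"
    using q[of "\<lambda>k. (if k = i then 1 else 0) + (if k = j then 1 else 0)"] ii jj
    unfolding qf_two[OF ij] by simp
  have 2: "Re (A $$ (i, j)) - Re (A $$ (j, i)) = 0"
    using q[of "\<lambda>k. (if k = i then 1 else 0) + (if k = j then \<i> else 0)"] ii jj
    unfolding qf_two[OF ij] by simp
  show "A $$ (i, j) = cnj (A $$ (j, i))" using 1 2 by (simp add: complex_eq_iff)
qed


lemma gram_qf:
  assumes "\<And>x y. x < n \<Longrightarrow> y < n \<Longrightarrow> A $$ (x, y) = (\<Sum>i<k. w i x * cnj (w i y))"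
  shows "qf n A f = of_real (\<Sum>i<k. (cmod (\<Sum>y<n. cnj (w i y) * f y))\<^sup>2)"
proof -
  have "qf n A f = (\<Sum>x<n. \<Sum>y<n. \<Sum>i<k. (cnj (f x) * w i x) * (cnj (w i y) * f y))"
    unfolding qf_def
  proof (intro sum.cong refl)
    fix x assume x: "x \<in> {..<n}"
    have "cnj (f x) * (\<Sum>y<n. A $$ (x, y) * f y) = (\<Sum>y<n. cnj (f x) * (A $$ (x, y) * f y))"
      by (rule sum_distrib_left)
    also have "\<dots> = (\<Sum>y<n. \<Sum>i<k. (cnj (f x) * w i x) * (cnj (w i y) * f y))"
    proof (intro sum.cong refl)
      fix y assume y: "y \<in> {..<n}"
      have "cnj (f x) * (A $$ (x, y) * f y) = (\<Sum>i<k. w i x * cnj (w i y)) * (cnj (f x) * f y)"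
        using x y assms by (simp add: mult_ac)
      also have "\<dots> = (\<Sum>i<k. (cnj (f x) * w i x) * (cnj (w i y) * f y))"
        by (subst sum_distrib_right) (simp add: mult_ac)
      finally show "cnj (f x) * (A $$ (x, y) * f y) = (\<Sum>i<k. (cnj (f x) * w i x) * (cnj (w i y) * f y))" .
    qed
    finally show "cnj (f x) * (\<Sum>y<n. A $$ (x, y) * f y) = (\<Sum>y<n. \<Sum>i<k. (cnj (f x) * w i x) * (cnj (w i y) * f y))" .
  qed
  also have "\<dots> = (\<Sum>x<n. \<Sum>i<k. \<Sum>y<n. (cnj (f x) * w i x) * (cnj (w i y) * f y))"
    by (intro sum.cong refl) (rule sum.swap)
  also have "\<dots> = (\<Sum>i<k. \<Sum>x<n. \<Sum>y<n. (cnj (f x) * w i x) * (cnj (w i y) * f y))"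
    by (rule sum.swap)
  also have "\<dots> = (\<Sum>i<k. (\<Sum>x<n. cnj (f x) * w i x) * (\<Sum>y<n. cnj (w i y) * f y))"
    by (simp only: sum_product)
  also have "\<dots> = (\<Sum>i<k. cnj (\<Sum>y<n. cnj (w i y) * f y) * (\<Sum>y<n. cnj (w i y) * f y))"
    by (simp add: mult.commute)
  also have "\<dots> = of_real (\<Sum>i<k. (cmod (\<Sum>y<n. cnj (w i y) * f y))\<^sup>2)"
    by (simp only: of_real_sum complex_norm_square mult.commute)
  finally show ?thesis .
qed

lemma gram_psd:
  assumes "A \<in> carrier_mat n n"
    "\<And>x y. x < n \<Longrightarrow> y < n \<Longrightarrow> A $$ (x, y) = (\<Sum>i<k. w i x * cnj (w i y))"
  shows "psd A"
  by (rule psdI[OF assms(1)]) (simp add: gram_qf[OF assms(2)] sum_nonneg del: of_real_sum)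

lemma udu_entry:
  assumes "U \<in> carrier_mat n n" "x < n" "y < n"
  shows "(U * diagm n d * dagger U) $$ (x, y) = (\<Sum>i<n. U $$ (x, i) * d i * cnj (U $$ (y, i)))"
proof -
  have UD: "U * diagm n d \<in> carrier_mat n n" using assms by simp
  have "(U * diagm n d * dagger U) $$ (x, y) = (\<Sum>i<n. (U * diagm n d) $$ (x, i) * dagger U $$ (i, y))"
    by (rule mult_entry[OF UD dagger_carrier[OF assms(1)] assms(2,3)])
  also have "\<dots> = (\<Sum>i<n. U $$ (x, i) * d i * cnj (U $$ (y, i)))"
    using assms by (intro sum.cong refl) (simp add: mult_diagm[OF assms(1) assms(2)] del: index_mult_mat)
  finally show ?thesis .
qed

lemma spectral_udu:
  assumes "unitary n U" "A \<in> carrier_mat n n" "A * U = U * diagm n d"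
  shows "A = U * diagm n d * dagger U"
proof -
  have c: "U \<in> carrier_mat n n" "dagger U \<in> carrier_mat n n" "U * dagger U = 1\<^sub>m n"
    using assms unfolding unitary_def by auto
  have "A = A * (U * dagger U)" using c assms by simp
  also have "\<dots> = (A * U) * dagger U" by (simp only: assoc_mult_mat[OF assms(2) c(1) c(2)])
  also have "\<dots> = U * diagm n d * dagger U" by (simp only: assms(3))
  finally show ?thesis .
qed

lemma psd_spectral:
  assumes "psd A" "A \<in> carrier_mat n n"
  shows "\<exists>U e. unitary n U \<and> (\<forall>i<n. e i \<ge> 0) \<and>
     (\<forall>x<n. \<forall>y<n. A $$ (x, y) = (\<Sum>i<n. U $$ (x, i) * of_real (e i) * cnj (U $$ (y, i))))"
proof -
  obtain U e where U: "unitary n U" "A * U = U * diagm n (\<lambda>i. of_real (e i))"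
    using spectral[OF psd_herm[OF assms]] by blast
  have c: "U \<in> carrier_mat n n" "dagger U * U = 1\<^sub>m n" using U unfolding unitary_def by auto
  have ev: "(\<Sum>l<n. A $$ (k, l) * U $$ (l, i)) = U $$ (k, i) * of_real (e i)" if "k < n" "i < n" for k i
    using arg_cong[OF U(2), of "\<lambda>M. M $$ (k, i)"] mult_entry[OF assms(2) c(1) that] mult_diagm[OF c(1) that]
    by simp
  have "e i \<ge> 0" if i: "i < n" for i
  proof -
    have "qf n A (\<lambda>k. U $$ (k, i)) = (\<Sum>k<n. cnj (U $$ (k, i)) * U $$ (k, i)) * of_real (e i)"
      unfolding qf_def using i by (simp add: ev sum_distrib_right mult.assoc)
    also have "(\<Sum>k<n. cnj (U $$ (k, i)) * U $$ (k, i)) = (dagger U * U) $$ (i, i)"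
      using c i by (subst mult_entry[of _ n n _ n]) auto
    also have "\<dots> = 1" using c i by simp
    finally show ?thesis using psd_qf(2)[OF assms, of "\<lambda>k. U $$ (k, i)"] by simp
  qed
  moreover have "\<forall>x<n. \<forall>y<n. A $$ (x, y) = (\<Sum>i<n. U $$ (x, i) * of_real (e i) * cnj (U $$ (y, i)))"
    using spectral_udu[OF U(1) assms(2) U(2)] udu_entry[OF c(1)] by metis
  ultimately show ?thesis using U by blast
qed

lemma psd_gram:
  assumes "psd A" "A \<in> carrier_mat n n"
  shows "\<exists>w. \<forall>x<n. \<forall>y<n. A $$ (x, y) = (\<Sum>i<n. w i x * cnj (w i y))"
proof -
  obtain U e where U: "unitary n U" "\<forall>i<n. e i \<ge> 0"
     "\<forall>x<n. \<forall>y<n. A $$ (x, y) = (\<Sum>i<n. U $$ (x, i) * of_real (e i) * cnj (U $$ (y, i)))"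
    using psd_spectral[OF assms] by blast
  define w where "w i x = U $$ (x, i) * of_real (sqrt (e i))" for i x
  have "A $$ (x, y) = (\<Sum>i<n. w i x * cnj (w i y))" if "x < n" "y < n" for x y
  proof -
    have "A $$ (x, y) = (\<Sum>i<n. U $$ (x, i) * of_real (e i) * cnj (U $$ (y, i)))" using U(3) that by auto
    also have "\<dots> = (\<Sum>i<n. w i x * cnj (w i y))" unfolding w_def
    proof (intro sum.cong refl)
      fix i assume "i \<in> {..<n}"
      hence "of_real (e i) = (of_real (sqrt (e i)) :: complex) * of_real (sqrt (e i))" using U(2)
        by (simp flip: of_real_mult)
      thus "U $$ (x, i) * of_real (e i) * cnj (U $$ (y, i)) =
        U $$ (x, i) * of_real (sqrt (e i)) * cnj (U $$ (y, i) * of_real (sqrt (e i)))" by simp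
    qed
    finally show ?thesis .
  qed
  thus ?thesis by blast
qed


declare dagger_carrier[simp del]

lemma dagger_carrier_iff[simp]: "dagger A \<in> carrier_mat m n \<longleftrightarrow> A \<in> carrier_mat n m"
  unfolding carrier_mat_def by auto

lemma mult_carrier_iff[simp]: "A * B \<in> carrier_mat n m \<longleftrightarrow> dim_row A = n \<and> dim_col B = m"
  unfolding carrier_mat_def by auto

lemma diagm_mult: "diagm n a * diagm n b = diagm n (\<lambda>i. a i * b i)"
proof (rule eq_matI)
  fix i j assume "i < dim_row (diagm n (\<lambda>i. a i * b i))" "j < dim_col (diagm n (\<lambda>i. a i * b i))"
  hence ij: "i < n" "j < n" by auto
  show "(diagm n a * diagm n b) $$ (i, j) = diagm n (\<lambda>i. a i * b i) $$ (i, j)"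
    unfolding mult_diagm[OF diagm_carrier(1) ij] using ij by (simp add: diagm_def)
qed auto

lemma diagm_cong: "(\<And>i. i < n \<Longrightarrow> a i = b i) \<Longrightarrow> diagm n a = diagm n b"
  by (rule eq_matI) (auto simp: diagm_def)

lemma udu_mult:
  assumes "unitary n U"
  shows "(U * diagm n a * dagger U) * (U * diagm n b * dagger U) = U * diagm n (\<lambda>i. a i * b i) * dagger U"
proof -
  have c: "U \<in> carrier_mat n n" "dagger U \<in> carrier_mat n n" "dagger U * U = 1\<^sub>m n"
    using assms unfolding unitary_def by auto
  have da: "diagm n a \<in> carrier_mat n n" "diagm n b \<in> carrier_mat n n" by auto
  have c2: "U * diagm n a \<in> carrier_mat n n" "U * diagm n b \<in> carrier_mat n n"
    "U * diagm n b * dagger U \<in> carrier_mat n n" "diagm n b * dagger U \<in> carrier_mat n n"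
    "diagm n a * diagm n b \<in> carrier_mat n n" using c by auto
  have 1: "dagger U * (U * diagm n b * dagger U) = diagm n b * dagger U"
    by (simp only: assoc_mult_mat[OF c(2) c2(2) c(2), symmetric] assoc_mult_mat[OF c(2) c(1) da(2), symmetric] c(3) left_mult_one_mat[OF da(2)])
  have "(U * diagm n a * dagger U) * (U * diagm n b * dagger U) = (U * diagm n a) * (diagm n b * dagger U)"
    by (simp only: assoc_mult_mat[OF c2(1) c(2) c2(3)] 1)
  also have "\<dots> = U * ((diagm n a * diagm n b) * dagger U)"
    by (simp only: assoc_mult_mat[OF c(1) da(1) c2(4)] assoc_mult_mat[OF da(1) da(2) c(2)])
  also have "\<dots> = U * diagm n (\<lambda>i. a i * b i) * dagger U"
    by (simp only: diagm_mult assoc_mult_mat[OF c(1) diagm_carrier(1) c(2), symmetric])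
  finally show ?thesis .
qed

lemma sqrt_exists:
  assumes "psd A" "A \<in> carrier_mat n n"
  shows "\<exists>B. psd B \<and> B \<in> carrier_mat n n \<and> B * B = A"
proof -
  obtain U e where U: "unitary n U" "\<forall>i<n. e i \<ge> 0"
     "\<forall>x<n. \<forall>y<n. A $$ (x, y) = (\<Sum>i<n. U $$ (x, i) * of_real (e i) * cnj (U $$ (y, i)))"
    using psd_spectral[OF assms] by blast
  have c: "U \<in> carrier_mat n n" using U unfolding unitary_def by auto
  define B where "B = U * diagm n (\<lambda>i. of_real (sqrt (e i))) * dagger U"
  have Bc: "B \<in> carrier_mat n n" unfolding B_def using c by simp
  have Aeq: "A = U * diagm n (\<lambda>i. of_real (e i)) * dagger U"
    by (rule eq_matI) (use U(3) assms(2) c in \<open>auto simp: udu_entry simp del: index_mult_mat\<close>)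
  have dd: "diagm n (\<lambda>i. (of_real (sqrt (e i)) :: complex) * of_real (sqrt (e i))) = diagm n (\<lambda>i. of_real (e i))"
    by (rule diagm_cong) (use U(2) in \<open>auto simp flip: of_real_mult\<close>)
  have BB: "B * B = A" unfolding B_def udu_mult[OF U(1)] Aeq dd ..
  have "psd B"
  proof (rule gram_psd[OF Bc])
    fix x y assume xy: "x < n" "y < n"
    have "B $$ (x, y) = (\<Sum>i<n. U $$ (x, i) * of_real (sqrt (e i)) * cnj (U $$ (y, i)))"
      unfolding B_def by (rule udu_entry[OF c xy])
    also have "\<dots> = (\<Sum>i<n. (U $$ (x, i) * of_real (sqrt (sqrt (e i)))) * cnj (U $$ (y, i) * of_real (sqrt (sqrt (e i)))))"
    proof (intro sum.cong refl)
      fix i assume "i \<in> {..<n}"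
      hence "(of_real (sqrt (e i)) :: complex) = of_real (sqrt (sqrt (e i))) * of_real (sqrt (sqrt (e i)))" using U(2)
        by (simp flip: of_real_mult)
      thus "U $$ (x, i) * of_real (sqrt (e i)) * cnj (U $$ (y, i)) =
        (U $$ (x, i) * of_real (sqrt (sqrt (e i)))) * cnj (U $$ (y, i) * of_real (sqrt (sqrt (e i))))" by simp
    qed
    finally show "B $$ (x, y) = (\<Sum>i<n. (U $$ (x, i) * of_real (sqrt (sqrt (e i)))) * cnj (U $$ (y, i) * of_real (sqrt (sqrt (e i)))))" .
  qed
  thus ?thesis using Bc BB by blast
qed

definition mv :: "nat \<Rightarrow> complex mat \<Rightarrow> (nat \<Rightarrow> complex) \<Rightarrow> nat \<Rightarrow> complex" where
  "mv n M f = (\<lambda>a. \<Sum>b<n. M $$ (a, b) * f b)"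

definition ip :: "nat \<Rightarrow> (nat \<Rightarrow> complex) \<Rightarrow> (nat \<Rightarrow> complex) \<Rightarrow> complex" where
  "ip n f g = (\<Sum>a<n. cnj (f a) * g a)"

lemma qf_ip: "qf n M f = ip n f (mv n M f)"
  unfolding qf_def ip_def mv_def ..

lemma ip_cnj: "ip n g f = cnj (ip n f g)"
  unfolding ip_def by (simp add: mult.commute)

lemma mv_mult:
  assumes "P \<in> carrier_mat n n" "Q \<in> carrier_mat n n" "a < n"
  shows "mv n (P * Q) x a = mv n P (mv n Q x) a"
proof -
  have "mv n (P * Q) x a = (\<Sum>b<n. (\<Sum>c<n. P $$ (a, c) * Q $$ (c, b)) * x b)"
    unfolding mv_def using assms by (intro sum.cong refl) (simp add: mult_entry[OF assms(1,2)] del: index_mult_mat)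
  also have "\<dots> = (\<Sum>b<n. \<Sum>c<n. P $$ (a, c) * (Q $$ (c, b) * x b))"
    by (simp add: sum_distrib_right mult.assoc)
  also have "\<dots> = (\<Sum>c<n. \<Sum>b<n. P $$ (a, c) * (Q $$ (c, b) * x b))"
    by (rule sum.swap)
  also have "\<dots> = mv n P (mv n Q x) a"
    unfolding mv_def by (simp add: sum_distrib_left)
  finally show ?thesis .
qed

lemma ip_herm:
  assumes "herm n P"
  shows "ip n f (mv n P g) = ip n (mv n P f) g"
proof -
  have "ip n f (mv n P g) = (\<Sum>a<n. \<Sum>b<n. cnj (f a) * P $$ (a, b) * g b)"
    unfolding ip_def mv_def by (simp add: sum_distrib_left mult.assoc)
  also have "\<dots> = (\<Sum>b<n. \<Sum>a<n. cnj (f a) * P $$ (a, b) * g b)" by (rule sum.swap)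
  also have "\<dots> = (\<Sum>b<n. \<Sum>a<n. cnj (P $$ (b, a) * f a) * g b)"
  proof (intro sum.cong refl)
    fix b a assume "b \<in> {..<n}" "a \<in> {..<n}"
    thus "cnj (f a) * P $$ (a, b) * g b = cnj (P $$ (b, a) * f a) * g b"
      using herm_index[OF assms, of a b] by (simp add: mult.commute)
  qed
  also have "\<dots> = ip n (mv n P f) g"
    unfolding ip_def mv_def by (simp add: sum_distrib_right)
  finally show ?thesis .
qed

lemma qf_sq:
  assumes "herm n P"
  shows "qf n (P * P) x = ip n (mv n P x) (mv n P x)"
proof -
  have Pc: "P \<in> carrier_mat n n" using assms unfolding herm_def by auto
  have "qf n (P * P) x = ip n x (mv n P (mv n P x))"
    unfolding qf_ip ip_def using mv_mult[OF Pc Pc] by (intro sum.cong refl) auto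
  also have "\<dots> = ip n (mv n P x) (mv n P x)" by (rule ip_herm[OF assms])
  finally show ?thesis .
qed

lemma ip_expand:
  "ip n (\<lambda>a. u a + c * v a) (\<lambda>a. u a + c * v a) =
    ip n u u + c * ip n u v + cnj c * ip n v u + cnj c * c * ip n v v"
  unfolding ip_def by (simp add: sum.distrib sum_distrib_left algebra_simps)


lemma ip_cong: "(\<And>a. a < n \<Longrightarrow> f a = f' a) \<Longrightarrow> (\<And>a. a < n \<Longrightarrow> g a = g' a) \<Longrightarrow> ip n f g = ip n f' g'"
  unfolding ip_def by (intro sum.cong) auto

lemma sqrt_unique_aux:
  assumes hB: "herm n B" and hC: "herm n C" and pB: "psd B" and pC: "psd C"
    and BB: "B * B = C * C"
    and mvB: "\<And>a. a < n \<Longrightarrow> mv n B x a = mv n C x a + of_real mu * x a"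
    and nx: "ip n x x = 1"
  shows "2 * mu * Re (qf n C x) + mu\<^sup>2 = 0"
proof -
  have Cc: "C \<in> carrier_mat n n" using hC unfolding herm_def by auto
  have "ip n (mv n B x) (mv n B x) = ip n (mv n C x) (mv n C x)"
    using qf_sq[OF hB, of x] qf_sq[OF hC, of x] BB by simp
  moreover have "ip n (mv n B x) (mv n B x) = ip n (\<lambda>a. mv n C x a + of_real mu * x a) (\<lambda>a. mv n C x a + of_real mu * x a)"
    by (rule ip_cong) (use mvB in auto)
  ultimately have "ip n (mv n C x) x * of_real mu + of_real mu * ip n x (mv n C x) + of_real mu * of_real mu * ip n x x = 0"
    unfolding ip_expand by (simp add: algebra_simps)
  hence "cnj (qf n C x) * of_real mu + of_real mu * qf n C x + of_real (mu\<^sup>2) = 0"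
    using nx unfolding qf_ip by (simp add: ip_cnj[of n "mv n C x" x] power2_eq_square)
  hence "Re (cnj (qf n C x) * of_real mu + of_real mu * qf n C x + of_real (mu\<^sup>2)) = 0" by simp
  thus ?thesis by (simp add: algebra_simps)
qed

lemma sqrt_unique:
  assumes pB: "psd B" and Bc: "B \<in> carrier_mat n n" and pC: "psd C" and Cc: "C \<in> carrier_mat n n"
    and BB: "B * B = C * C"
  shows "B = C"
proof -
  have hB: "herm n B" and hC: "herm n C" using psd_herm assms by auto
  define D where "D = B - C"
  have Dc: "D \<in> carrier_mat n n" unfolding D_def using Bc Cc by auto
  have Dij: "D $$ (i, j) = B $$ (i, j) - C $$ (i, j)" if "i < n" "j < n" for i j
    unfolding D_def using that Bc Cc by auto
  have hD: "herm n D"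
  proof (rule hermI[OF Dc])
    fix i j assume ij: "i < n" "j < n"
    show "D $$ (i, j) = cnj (D $$ (j, i))"
      unfolding Dij[OF ij] Dij[OF ij(2,1)] using herm_index[OF hB ij] herm_index[OF hC ij] by simp
  qed
  obtain U mu where U: "unitary n U" "D * U = U * diagm n (\<lambda>i. of_real (mu i))"
    using spectral[OF hD] by blast
  have Uc: "U \<in> carrier_mat n n" "dagger U * U = 1\<^sub>m n" using U unfolding unitary_def by auto
  have mu0: "mu i = 0" if i: "i < n" for i
  proof -
    define x where "x k = U $$ (k, i)" for k
    have mvD: "mv n D x a = of_real (mu i) * x a" if a: "a < n" for a
      using arg_cong[OF U(2), of "\<lambda>M. M $$ (a, i)"] mult_entry[OF Dc Uc(1) a i] mult_diagm[OF Uc(1) a i]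
      unfolding mv_def x_def by (simp add: mult.commute del: index_mult_mat)
    have mvD': "mv n D x a = mv n B x a - mv n C x a" if a: "a < n" for a
      unfolding mv_def using a by (simp add: Dij left_diff_distrib sum_subtractf)
    have nx: "ip n x x = 1"
    proof -
      have "ip n x x = (dagger U * U) $$ (i, i)"
        unfolding ip_def x_def using Uc i by (subst mult_entry[of _ n n _ n]) auto
      thus ?thesis using Uc i by simp
    qed
    have e1: "2 * mu i * Re (qf n C x) + (mu i)\<^sup>2 = 0"
      by (rule sqrt_unique_aux[OF hB hC pB pC BB _ nx]) (use mvD mvD' in \<open>auto simp: algebra_simps\<close>)
    have e2: "2 * (- mu i) * Re (qf n B x) + (- mu i)\<^sup>2 = 0"
      by (rule sqrt_unique_aux[OF hC hB pC pB BB[symmetric] _ nx]) (use mvD mvD' in \<open>auto simp: algebra_simps\<close>)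
    have qB: "Re (qf n B x) \<ge> 0" and qC: "Re (qf n C x) \<ge> 0" using psd_qf(2) pB Bc pC Cc by auto
    show "mu i = 0"
    proof (rule ccontr)
      assume ne: "mu i \<noteq> 0"
      show False
      proof (cases "mu i > 0")
        case True
        hence "2 * mu i * Re (qf n C x) \<ge> 0" using qC by simp
        moreover have "(mu i)\<^sup>2 > 0" using ne by simp
        ultimately show False using e1 by linarith
      next
        case False
        hence "2 * (- mu i) * Re (qf n B x) \<ge> 0" using qB by (simp add: mult_nonpos_nonneg)
        moreover have "(- mu i)\<^sup>2 > 0" using ne by simp
        ultimately show False using e2 by linarith
      qed
    qed
  qed
  have Deq: "D = U * diagm n (\<lambda>i. of_real (mu i)) * dagger U" by (rule spectral_udu[OF U(1) Dc U(2)])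
  have "D $$ (a, b) = 0" if "a < n" "b < n" for a b
    using udu_entry[OF Uc(1) that, of "\<lambda>i. of_real (mu i)"] mu0 Deq by simp
  thus "B = C" using Dij Bc Cc by (intro eq_matI) auto
qed

lemma msqrt_eq:
  assumes "psd A" "A \<in> carrier_mat n n" "psd B" "B \<in> carrier_mat n n" "B * B = A"
  shows "msqrt A = B"
  unfolding msqrt_def
proof (rule the_equality)
  show "psd B \<and> dim_row B = dim_row A \<and> B * B = A" using assms by auto
  fix B' assume B': "psd B' \<and> dim_row B' = dim_row A \<and> B' * B' = A"
  hence "B' \<in> carrier_mat n n" using psd_carrier[of B'] assms(2) by auto
  thus "B' = B" using sqrt_unique[of B' n B] B' assms by auto
qed

lemma msqrt_props:
  assumes "psd A" "A \<in> carrier_mat n n"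
  shows "psd (msqrt A)" "msqrt A \<in> carrier_mat n n" "msqrt A * msqrt A = A"
proof -
  obtain B where "psd B" "B \<in> carrier_mat n n" "B * B = A" using sqrt_exists[OF assms] by blast
  moreover have "msqrt A = B" using msqrt_eq[OF assms] calculation by auto
  ultimately show "psd (msqrt A)" "msqrt A \<in> carrier_mat n n" "msqrt A * msqrt A = A" by auto
qed


definition rk1 :: "nat \<Rightarrow> (nat \<Rightarrow> complex) \<Rightarrow> complex mat" where
  "rk1 n f = mat n n (\<lambda>(i, j). f i * cnj (f j))"

lemma rk1_carrier[simp]: "rk1 n f \<in> carrier_mat n n" "dim_row (rk1 n f) = n" "dim_col (rk1 n f) = n"
  by (auto simp: rk1_def)

lemma rk1_index[simp]: "i < n \<Longrightarrow> j < n \<Longrightarrow> rk1 n f $$ (i, j) = f i * cnj (f j)"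
  by (simp add: rk1_def)

lemma rk1_psd: "psd (rk1 n f)"
  by (rule gram_psd[OF rk1_carrier(1), where k="1::nat" and w="\<lambda>_. f"]) simp

lemma rk1_dagger: "dagger (rk1 n f) = rk1 n f"
  by (rule eq_matI) (auto simp: mult.commute)

lemma rk1_trace: "mtrace (rk1 n f) = ip n f f"
  unfolding mtrace_def ip_def by (simp add: mult.commute)

lemma rk1_sq: "rk1 n f * rk1 n f = ip n f f \<cdot>\<^sub>m rk1 n f"
proof (rule eq_matI)
  fix i j assume "i < dim_row (ip n f f \<cdot>\<^sub>m rk1 n f)" "j < dim_col (ip n f f \<cdot>\<^sub>m rk1 n f)"
  hence ij: "i < n" "j < n" by auto
  have "(rk1 n f * rk1 n f) $$ (i, j) = (\<Sum>k<n. f i * cnj (f k) * (f k * cnj (f j)))"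
    using ij by (subst mult_entry[of _ n n _ n]) auto
  also have "\<dots> = ip n f f * (f i * cnj (f j))"
    unfolding ip_def by (simp add: sum_distrib_left sum_distrib_right mult_ac)
  finally show "(rk1 n f * rk1 n f) $$ (i, j) = (ip n f f \<cdot>\<^sub>m rk1 n f) $$ (i, j)" using ij by simp
qed auto

lemma ip_scale: "ip n (\<lambda>i. of_real t * f i) (\<lambda>i. of_real t * f i) = of_real (t\<^sup>2) * ip n f f"
  unfolding ip_def by (simp add: sum_distrib_left mult_ac power2_eq_square)

lemma sandwich:
  assumes M: "M \<in> carrier_mat n n" and im: "Im (qf n M f) = 0" and re: "Re (qf n M f) \<ge> 0"
  shows "rk1 n f * M * rk1 n f = rk1 n (\<lambda>i. of_real (sqrt (Re (qf n M f))) * f i)"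
proof (rule eq_matI)
  fix i j assume "i < dim_row (rk1 n (\<lambda>i. of_real (sqrt (Re (qf n M f))) * f i))"
    "j < dim_col (rk1 n (\<lambda>i. of_real (sqrt (Re (qf n M f))) * f i))"
  hence ij: "i < n" "j < n" by auto
  have c1: "rk1 n f * M \<in> carrier_mat n n" using M by simp
  have e1: "(rk1 n f * M) $$ (i, l) = f i * (\<Sum>k<n. cnj (f k) * M $$ (k, l))" if "l < n" for l
    using ij that M by (subst mult_entry[of _ n n _ n]) (auto simp: sum_distrib_left mult_ac)
  have "(rk1 n f * M * rk1 n f) $$ (i, j) = (\<Sum>l<n. (rk1 n f * M) $$ (i, l) * (f l * cnj (f j)))"
    using ij c1 by (subst mult_entry[of _ n n _ n]) auto
  also have "\<dots> = (\<Sum>l<n. f i * (\<Sum>k<n. cnj (f k) * M $$ (k, l)) * (f l * cnj (f j)))"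
    by (intro sum.cong refl) (simp add: e1)
  also have "\<dots> = f i * cnj (f j) * (\<Sum>l<n. \<Sum>k<n. cnj (f k) * M $$ (k, l) * f l)"
    by (simp add: sum_distrib_left sum_distrib_right mult_ac)
  also have "(\<Sum>l<n. \<Sum>k<n. cnj (f k) * M $$ (k, l) * f l) = qf n M f"
    unfolding qf_def by (subst sum.swap) (simp add: sum_distrib_left mult_ac)
  also have "qf n M f = of_real (Re (qf n M f))" using im by (simp add: complex_eq_iff)
  also have "\<dots> = of_real (sqrt (Re (qf n M f))) * of_real (sqrt (Re (qf n M f)))"
    using re by (simp flip: of_real_mult)
  finally show "(rk1 n f * M * rk1 n f) $$ (i, j) = rk1 n (\<lambda>i. of_real (sqrt (Re (qf n M f))) * f i) $$ (i, j)"
    using ij by (simp add: mult_ac)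
qed auto

lemma fidelity_pure:
  assumes pX: "psd X" and Xc: "X \<in> carrier_mat n n" and nf: "ip n f f = 1"
  shows "fidelity X (rk1 n f) = sqrt (Re (qf n X f))"
proof -
  define P where "P = rk1 n f"
  have Pc: "P \<in> carrier_mat n n" unfolding P_def by simp
  have mP: "msqrt P = P" unfolding P_def
    by (rule msqrt_eq[OF rk1_psd rk1_carrier(1) rk1_psd rk1_carrier(1)]) (auto simp: rk1_sq nf intro!: eq_matI)
  define B where "B = msqrt X"
  have B: "psd B" "B \<in> carrier_mat n n" "B * B = X" using msqrt_props[OF pX Xc] unfolding B_def by auto
  have dB: "dagger B = B" using psd_herm[OF B(1,2)] unfolding herm_def by auto
  have "dagger (B * P) * (B * P) = (P * B) * (B * P)"
    using dagger_mult[OF B(2) Pc] rk1_dagger dB unfolding P_def by simp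
  also have "\<dots> = P * X * P" using B Pc by (simp flip: B(3))
  finally have YY: "dagger (B * P) * (B * P) = P * X * P" .
  define r where "r = Re (qf n X f)"
  have r0: "r \<ge> 0" and im: "Im (qf n X f) = 0" using psd_qf[OF pX Xc] unfolding r_def by auto
  have PXP: "P * X * P = rk1 n (\<lambda>i. of_real (sqrt r) * f i)"
    unfolding P_def r_def by (rule sandwich[OF Xc im]) (use r0 r_def in auto)
  define h where "h i = of_real (sqrt (sqrt r)) * f i" for i
  have ih: "ip n h h = of_real (sqrt r)" unfolding h_def ip_scale nf using r0 by simp
  have "msqrt (rk1 n (\<lambda>i. of_real (sqrt r) * f i)) = rk1 n h"
  proof (rule msqrt_eq[OF rk1_psd rk1_carrier(1) rk1_psd rk1_carrier(1)])
    show "rk1 n h * rk1 n h = rk1 n (\<lambda>i. of_real (sqrt r) * f i)"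
    proof (rule eq_matI)
      fix i j assume "i < dim_row (rk1 n (\<lambda>i. of_real (sqrt r) * f i))" "j < dim_col (rk1 n (\<lambda>i. of_real (sqrt r) * f i))"
      hence ij: "i < n" "j < n" by auto
      have "(of_real (sqrt r) :: complex) * (of_real (sqrt (sqrt r)) * of_real (sqrt (sqrt r))) = of_real (sqrt r) * of_real (sqrt r)"
        using r0 by (simp flip: of_real_mult)
      thus "(rk1 n h * rk1 n h) $$ (i, j) = rk1 n (\<lambda>i. of_real (sqrt r) * f i) $$ (i, j)"
        unfolding rk1_sq ih using ij unfolding h_def by (simp add: mult_ac)
    qed auto
  qed
  hence "fidelity X (rk1 n f) = Re (mtrace (rk1 n h))"
    unfolding fidelity_def trace_norm_def mP[unfolded P_def] B_def[symmetric] YY[unfolded P_def] PXP[unfolded P_def] by simp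
  also have "\<dots> = sqrt r" unfolding rk1_trace ih by simp
  finally show ?thesis unfolding r_def .
qed


lemma dm_simps[simp]:
  fixes j b n :: nat
  assumes "b < n"
  shows "(j * n + b) div n = j" "(j * n + b) mod n = b"
  using assms by auto

lemma sum_split:
  fixes m n :: nat
  shows "(\<Sum>r<m * n. g r) = (\<Sum>j<m. \<Sum>b<n. g (j * n + b))"
proof -
  have "(\<Sum>b<n. g (j * n + b)) = sum g {j * n..<j * n + n}" for j
    using sum.atLeastLessThan_shift_0[of g "j * n" "j * n + n"] by (simp add: atLeast0LessThan comp_def)
  thus ?thesis by (simp add: sum.nat_group[symmetric])
qed

lemma lt_mult_bound:
  fixes a b n m :: nat
  assumes "a < m" "b < n"
  shows "a * n + b < m * n"
proof -
  have "a * n + b < a * n + n" using assms by simp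
  also have "\<dots> = Suc a * n" by simp
  also have "\<dots> \<le> m * n" using assms by (intro mult_le_mono1) simp
  finally show ?thesis .
qed

definition linmap :: "nat \<Rightarrow> nat \<Rightarrow> (complex mat \<Rightarrow> complex mat) \<Rightarrow> bool" where
  "linmap din dout N \<longleftrightarrow>
     (\<forall>A \<in> carrier_mat din din. N A \<in> carrier_mat dout dout) \<and>
     (\<forall>A \<in> carrier_mat din din. \<forall>B \<in> carrier_mat din din. N (A + B) = N A + N B) \<and>
     (\<forall>A \<in> carrier_mat din din. \<forall>c. N (c \<cdot>\<^sub>m A) = c \<cdot>\<^sub>m N A)"

lemma qc_linmap: "quantum_channel din dout N \<Longrightarrow> linmap din dout N"
  unfolding quantum_channel_def linmap_def by blast

lemma mat_unit_carrier[simp]: "mat_unit d i j \<in> carrier_mat d d"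
  by (simp add: mat_unit_def)

lemma chan_lin:
  assumes L: "linmap din dout N" and X: "X \<in> carrier_mat din din" and pq: "p < dout" "q < dout"
  shows "N X $$ (p, q) = (\<Sum>a<din. \<Sum>b<din. X $$ (a, b) * N (mat_unit din a b) $$ (p, q))"
proof -
  have Nc: "\<And>A. A \<in> carrier_mat din din \<Longrightarrow> N A \<in> carrier_mat dout dout"
    and Nadd: "\<And>A B. A \<in> carrier_mat din din \<Longrightarrow> B \<in> carrier_mat din din \<Longrightarrow> N (A + B) = N A + N B"
    and Nsm: "\<And>A c. A \<in> carrier_mat din din \<Longrightarrow> N (c \<cdot>\<^sub>m A) = c \<cdot>\<^sub>m N A"
    using L unfolding linmap_def by auto
  define S where "S t = mat din din (\<lambda>(a, b). if a * din + b < t then X $$ (a, b) else 0)" for t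
  have Sc: "S t \<in> carrier_mat din din" for t unfolding S_def by auto
  have step: "t \<le> din * din \<Longrightarrow> N (S t) $$ (p, q) =
      (\<Sum>s<t. X $$ (s div din, s mod din) * N (mat_unit din (s div din) (s mod din)) $$ (p, q))" for t
  proof (induction t)
    case 0
    have "S 0 = 0 \<cdot>\<^sub>m S 0" unfolding S_def by (rule eq_matI) auto
    hence "N (S 0) = 0 \<cdot>\<^sub>m N (S 0)" using Nsm[OF Sc, of 0 0] by simp
    hence "N (S 0) $$ (p, q) = 0 * N (S 0) $$ (p, q)" using Nc[OF Sc, of 0] pq
      by (metis carrier_matD(1) carrier_matD(2) index_smult_mat(1))
    hence "N (S 0) $$ (p, q) = 0" by simp
    thus ?case by simp
  next
    case (Suc t)
    have t: "t < din * din" using Suc.prems by simp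
    have din0: "din > 0" using t by (cases din) auto
    define a b where "a = t div din" and "b = t mod din"
    have ab: "a < din" "b < din" "t = a * din + b" unfolding a_def b_def using t din0
      by (auto simp: less_mult_imp_div_less)
    have eq: "S (Suc t) = S t + X $$ (a, b) \<cdot>\<^sub>m mat_unit din a b"
    proof (rule eq_matI)
      fix i j assume "i < dim_row (S t + X $$ (a, b) \<cdot>\<^sub>m mat_unit din a b)" "j < dim_col (S t + X $$ (a, b) \<cdot>\<^sub>m mat_unit din a b)"
      hence ij: "i < din" "j < din" by (auto simp: S_def mat_unit_def)
      have "i * din + j = t \<longleftrightarrow> i = a \<and> j = b"
      proof
        assume "i * din + j = t"
        thus "i = a \<and> j = b" using ij unfolding a_def b_def by auto
      qed (use ab in auto)
      thus "S (Suc t) $$ (i, j) = (S t + X $$ (a, b) \<cdot>\<^sub>m mat_unit din a b) $$ (i, j)"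
        using ij unfolding S_def mat_unit_def by auto
    qed (auto simp: S_def mat_unit_def)
    have "N (S (Suc t)) $$ (p, q) = N (S t) $$ (p, q) + X $$ (a, b) * N (mat_unit din a b) $$ (p, q)"
      unfolding eq using Nadd[OF Sc, of "X $$ (a, b) \<cdot>\<^sub>m mat_unit din a b"] Nsm[OF mat_unit_carrier]
        Nc[OF Sc, of t] Nc[OF mat_unit_carrier, of a b] pq by simp
    moreover have "t div din = a" "t mod din = b" unfolding a_def b_def by simp_all
    ultimately show ?case using Suc.IH t by simp
  qed
  have "S (din * din) = X"
  proof (rule eq_matI)
    fix i j assume "i < dim_row X" "j < dim_col X"
    thus "S (din * din) $$ (i, j) = X $$ (i, j)" using X lt_mult_bound[of i din j din] unfolding S_def by auto
  qed (use X in \<open>auto simp: S_def\<close>)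
  hence "N X $$ (p, q) = (\<Sum>s<din * din. X $$ (s div din, s mod din) * N (mat_unit din (s div din) (s mod din)) $$ (p, q))"
    using step[of "din * din"] by simp
  also have "\<dots> = (\<Sum>a<din. \<Sum>b<din. X $$ (a, b) * N (mat_unit din a b) $$ (p, q))"
    by (subst sum_split) simp
  finally show ?thesis .
qed


definition psi :: "nat \<Rightarrow> nat \<Rightarrow> complex" where
  "psi d r = (if r div d = r mod d then of_real (1 / sqrt (real d)) else 0)"

lemma psi_digit: "b < d \<Longrightarrow> psi d (k * d + b) = (if k = b then of_real (1 / sqrt (real d)) else 0)"
  unfolding psi_def by simp

lemma sqrt_inv_sq: "d > 0 \<Longrightarrow> (of_real (1 / sqrt (real d)) :: complex) * of_real (1 / sqrt (real d)) = 1 / of_nat d"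
  by (simp flip: of_real_mult add: of_real_divide)

lemma sqrt_sq_c: "(complex_of_real (sqrt (real d))) * complex_of_real (sqrt (real d)) = of_nat d"
  by (simp flip: of_real_mult)

lemma maxent_rk1:
  assumes "d > 0"
  shows "maxent d = rk1 (d * d) (psi d)"
  by (rule eq_matI) (use assms in \<open>auto simp: maxent_def psi_def sqrt_inv_sq sqrt_sq_c\<close>)

lemma sum_delta_nat[simp]:
  fixes k d :: nat
  assumes "k < d"
  shows "(\<Sum>b<d. if k = b then g b else 0) = g k"
  using assms by (subst sum.delta') auto

lemma psi_norm:
  assumes "d > 0"
  shows "ip (d * d) (psi d) (psi d) = 1"
proof -
  have "ip (d * d) (psi d) (psi d) = (\<Sum>j<d. \<Sum>b<d. cnj (psi d (j * d + b)) * psi d (j * d + b))"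
    unfolding ip_def by (rule sum_split)
  also have "\<dots> = (\<Sum>j<d. 1 / of_nat d)"
  proof (intro sum.cong refl)
    fix j assume j: "j \<in> {..<d}"
    have "(\<Sum>b<d. cnj (psi d (j * d + b)) * psi d (j * d + b)) = (\<Sum>b<d. if j = b then 1 / of_nat d else 0)"
      by (intro sum.cong refl) (use assms sqrt_inv_sq[OF assms] in \<open>auto simp: psi_digit\<close>)
    also have "\<dots> = 1 / of_nat d" using j by simp
    finally show "(\<Sum>b<d. cnj (psi d (j * d + b)) * psi d (j * d + b)) = 1 / of_nat d" .
  qed
  also have "\<dots> = 1" using assms by simp
  finally show ?thesis .
qed

definition blk :: "nat \<Rightarrow> complex mat \<Rightarrow> nat \<Rightarrow> nat \<Rightarrow> complex mat" where
  "blk d X j k = mat d d (\<lambda>(a, b). X $$ (j * d + a, k * d + b))"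

lemma blk_carrier[simp]: "blk d X j k \<in> carrier_mat d d" by (simp add: blk_def)

lemma id_tensor_digit:
  assumes "j < n" "k < n" "b < d" "b' < d"
  shows "id_tensor n d d N X $$ (j * d + b, k * d + b') = N (blk d X j k) $$ (b, b')"
proof -
  have "j * d + b < n * d" "k * d + b' < n * d" using assms lt_mult_bound by auto
  thus ?thesis unfolding id_tensor_def blk_def using assms by simp
qed

definition chi :: "nat \<Rightarrow> (complex mat \<Rightarrow> complex mat) \<Rightarrow> complex mat" where
  "chi d N = mat (d * d) (d * d) (\<lambda>(y, x). N (mat_unit d (x mod d) (y mod d)) $$ (x div d, y div d) / of_nat d)"

lemma chi_carrier[simp]: "chi d N \<in> carrier_mat (d * d) (d * d)" by (simp add: chi_def)

lemma chi_digit: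
  assumes "j < d" "k < d" "a < d" "b < d"
  shows "chi d N $$ (k * d + b, j * d + a) = N (mat_unit d a b) $$ (j, k) / of_nat d"
proof -
  have "j * d + a < d * d" "k * d + b < d * d" using assms lt_mult_bound by auto
  thus ?thesis unfolding chi_def using assms by simp
qed

lemma Qform:
  assumes L: "linmap d d N" and X: "X \<in> carrier_mat (d * d) (d * d)" and d0: "d > 0"
  shows "qf (d * d) (id_tensor d d d N X) (psi d) = (\<Sum>x<d * d. \<Sum>y<d * d. X $$ (x, y) * chi d N $$ (y, x))"
proof -
  define c where "c = (of_real (1 / sqrt (real d)) :: complex)"
  define Y where "Y = id_tensor d d d N X"
  have inner: "(\<Sum>r<d * d. Y $$ (j * d + a, r) * psi d r) = c * (\<Sum>k<d. N (blk d X j k) $$ (a, k))"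
    if ja: "j < d" "a < d" for j a
  proof -
    have "(\<Sum>r<d * d. Y $$ (j * d + a, r) * psi d r) = (\<Sum>k<d. \<Sum>b<d. Y $$ (j * d + a, k * d + b) * psi d (k * d + b))"
      by (rule sum_split)
    also have "\<dots> = (\<Sum>k<d. Y $$ (j * d + a, k * d + k) * c)"
    proof (intro sum.cong refl)
      fix k assume k: "k \<in> {..<d}"
      have "(\<Sum>b<d. Y $$ (j * d + a, k * d + b) * psi d (k * d + b)) = (\<Sum>b<d. if k = b then Y $$ (j * d + a, k * d + b) * c else 0)"
        by (intro sum.cong refl) (simp add: psi_digit c_def)
      also have "\<dots> = Y $$ (j * d + a, k * d + k) * c" using k by simp
      finally show "(\<Sum>b<d. Y $$ (j * d + a, k * d + b) * psi d (k * d + b)) = Y $$ (j * d + a, k * d + k) * c" .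
    qed
    also have "\<dots> = (\<Sum>k<d. c * N (blk d X j k) $$ (a, k))"
    proof (intro sum.cong refl)
      fix k assume k: "k \<in> {..<d}"
      have "Y $$ (j * d + a, k * d + k) = N (blk d X j k) $$ (a, k)"
        unfolding Y_def by (rule id_tensor_digit) (use ja k in auto)
      thus "Y $$ (j * d + a, k * d + k) * c = c * N (blk d X j k) $$ (a, k)"
        by (simp only: mult.commute)
    qed
    also have "\<dots> = c * (\<Sum>k<d. N (blk d X j k) $$ (a, k))" by (simp add: sum_distrib_left)
    finally show ?thesis .
  qed
  have "qf (d * d) Y (psi d) = (\<Sum>j<d. \<Sum>a<d. cnj (psi d (j * d + a)) * (\<Sum>r<d * d. Y $$ (j * d + a, r) * psi d r))"
    unfolding qf_def by (rule sum_split)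
  also have "\<dots> = (\<Sum>j<d. cnj c * (c * (\<Sum>k<d. N (blk d X j k) $$ (j, k))))"
  proof (intro sum.cong refl)
    fix j assume j: "j \<in> {..<d}"
    have "(\<Sum>a<d. cnj (psi d (j * d + a)) * (\<Sum>r<d * d. Y $$ (j * d + a, r) * psi d r))
       = (\<Sum>a<d. if j = a then cnj c * (c * (\<Sum>k<d. N (blk d X j k) $$ (a, k))) else 0)"
      by (intro sum.cong refl) (use j in \<open>simp add: psi_digit c_def inner\<close>)
    also have "\<dots> = cnj c * (c * (\<Sum>k<d. N (blk d X j k) $$ (j, k)))" using j by simp
    finally show "(\<Sum>a<d. cnj (psi d (j * d + a)) * (\<Sum>r<d * d. Y $$ (j * d + a, r) * psi d r))
       = cnj c * (c * (\<Sum>k<d. N (blk d X j k) $$ (j, k)))" .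
  qed
  also have "\<dots> = (\<Sum>j<d. \<Sum>k<d. N (blk d X j k) $$ (j, k) / of_nat d)"
    using sqrt_inv_sq[OF d0] unfolding c_def by (simp add: sum_distrib_left sum_divide_distrib)
  also have "\<dots> = (\<Sum>j<d. \<Sum>k<d. \<Sum>a<d. \<Sum>b<d. X $$ (j * d + a, k * d + b) * (N (mat_unit d a b) $$ (j, k) / of_nat d))"
  proof (intro sum.cong refl)
    fix j k assume jk: "j \<in> {..<d}" "k \<in> {..<d}"
    show "N (blk d X j k) $$ (j, k) / of_nat d = (\<Sum>a<d. \<Sum>b<d. X $$ (j * d + a, k * d + b) * (N (mat_unit d a b) $$ (j, k) / of_nat d))"
      using chan_lin[OF L blk_carrier, of j k X j k] jk
      by (simp add: sum_divide_distrib blk_def mult.assoc)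
  qed
  also have "\<dots> = (\<Sum>j<d. \<Sum>a<d. \<Sum>k<d. \<Sum>b<d. X $$ (j * d + a, k * d + b) * chi d N $$ (k * d + b, j * d + a))"
  proof (rule sum.cong[OF refl])
    fix j assume j: "j \<in> {..<d}"
    show "(\<Sum>k<d. \<Sum>a<d. \<Sum>b<d. X $$ (j * d + a, k * d + b) * (N (mat_unit d a b) $$ (j, k) / of_nat d)) =
       (\<Sum>a<d. \<Sum>k<d. \<Sum>b<d. X $$ (j * d + a, k * d + b) * chi d N $$ (k * d + b, j * d + a))"
      by (subst sum.swap) (use j in \<open>auto simp: chi_digit intro!: sum.cong\<close>)
  qed
  also have "\<dots> = (\<Sum>x<d * d. \<Sum>y<d * d. X $$ (x, y) * chi d N $$ (y, x))"
    by (simp add: sum_split)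
  finally show ?thesis unfolding Y_def .
qed


definition tr2 :: "nat \<Rightarrow> complex mat \<Rightarrow> complex mat \<Rightarrow> complex" where
  "tr2 n R M = (\<Sum>x<n. \<Sum>y<n. R $$ (x, y) * M $$ (y, x))"

definition cpish :: "nat \<Rightarrow> (complex mat \<Rightarrow> complex mat) \<Rightarrow> bool" where
  "cpish d N \<longleftrightarrow> linmap d d N \<and> (\<forall>X \<in> carrier_mat (d * d) (d * d). psd X \<longrightarrow> psd (id_tensor d d d N X))"

lemma qc_cpish: "quantum_channel d d N \<Longrightarrow> cpish d N"
  unfolding cpish_def using qc_linmap unfolding quantum_channel_def by blast

lemma tr_gram:
  assumes "\<And>x y. x < n \<Longrightarrow> y < n \<Longrightarrow> R $$ (x, y) = (\<Sum>i\<in>I. w i x * cnj (w i y))"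
  shows "tr2 n R M = (\<Sum>i\<in>I. qf n M (w i))"
proof -
  have "tr2 n R M = (\<Sum>x<n. \<Sum>y<n. \<Sum>i\<in>I. w i x * cnj (w i y) * M $$ (y, x))"
    unfolding tr2_def using assms by (simp add: sum_distrib_right)
  also have "\<dots> = (\<Sum>i\<in>I. \<Sum>x<n. \<Sum>y<n. w i x * cnj (w i y) * M $$ (y, x))"
    by (simp add: sum.swap[of _ I])
  also have "\<dots> = (\<Sum>i\<in>I. \<Sum>y<n. \<Sum>x<n. w i x * cnj (w i y) * M $$ (y, x))"
    by (rule sum.cong[OF refl]) (rule sum.swap)
  also have "\<dots> = (\<Sum>i\<in>I. qf n M (w i))"
    unfolding qf_def by (rule sum.cong[OF refl]) (simp add: sum_distrib_left mult_ac)
  finally show ?thesis .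
qed

lemma qf_as_tr: "qf n M g = tr2 n (rk1 n g) M"
  by (subst tr_gram[where I="{0::nat}" and w="\<lambda>_. g"]) auto

lemma chi_psd:
  assumes cp: "cpish d N" and d0: "d > 0"
  shows "psd (chi d N)"
proof (rule psdI[OF chi_carrier])
  fix g
  have L: "linmap d d N" and C: "psd (id_tensor d d d N (rk1 (d * d) g))"
    using cp rk1_psd unfolding cpish_def by auto
  have "qf (d * d) (chi d N) g = tr2 (d * d) (rk1 (d * d) g) (chi d N)" by (rule qf_as_tr)
  also have "\<dots> = qf (d * d) (id_tensor d d d N (rk1 (d * d) g)) (psi d)"
    unfolding Qform[OF L rk1_carrier(1) d0] tr2_def ..
  finally have "qf (d * d) (chi d N) g = qf (d * d) (id_tensor d d d N (rk1 (d * d) g)) (psi d)" .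
  moreover have "id_tensor d d d N (rk1 (d * d) g) \<in> carrier_mat (d * d) (d * d)"
    unfolding id_tensor_def by simp
  ultimately show "Im (qf (d * d) (chi d N) g) = 0 \<and> 0 \<le> Re (qf (d * d) (chi d N) g)"
    using psd_qf[OF C] by auto
qed

lemma fid_formula:
  assumes cp: "cpish d N" and d0: "d > 0" and rho: "density (d * d) \<rho>"
  shows "fidelity (id_tensor d d d N \<rho>) (maxent d) = sqrt (Re (tr2 (d * d) \<rho> (chi d N)))"
proof -
  have L: "linmap d d N" and rc: "\<rho> \<in> carrier_mat (d * d) (d * d)" and "psd \<rho>"
    using cp rho unfolding cpish_def density_def by auto
  hence C: "psd (id_tensor d d d N \<rho>)" using cp unfolding cpish_def by auto
  have Yc: "id_tensor d d d N \<rho> \<in> carrier_mat (d * d) (d * d)" unfolding id_tensor_def by simp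
  show ?thesis
    unfolding maxent_rk1[OF d0] fidelity_pure[OF C Yc psi_norm[OF d0]] Qform[OF L rc d0] tr2_def ..
qed

lemma ip_self: "ip n g g = of_real (\<Sum>x<n. (cmod (g x))\<^sup>2)"
  unfolding ip_def of_real_sum by (rule sum.cong[OF refl]) (simp add: complex_norm_square mult.commute del: of_real_power)

lemma qf_bound:
  fixes M :: "complex mat"
  shows "Re (qf n M g) \<le> (2 * real n * (\<Sum>x<n. \<Sum>y<n. cmod (M $$ (x, y)))) * Re (ip n g g)"
proof -
  define K where "K = (\<Sum>x<n. \<Sum>y<n. cmod (M $$ (x, y)))"
  have K0: "K \<ge> 0" unfolding K_def by (simp add: sum_nonneg)
  have Kb: "cmod (M $$ (x, y)) \<le> K" if "x < n" "y < n" for x y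
  proof -
    have "cmod (M $$ (x, y)) \<le> (\<Sum>y<n. cmod (M $$ (x, y)))"
      using that by (intro member_le_sum) auto
    also have "\<dots> \<le> K" unfolding K_def using that by (intro member_le_sum[of x]) (auto intro: sum_nonneg)
    finally show ?thesis .
  qed
  have "Re (qf n M g) \<le> cmod (qf n M g)" by (rule complex_Re_le_cmod)
  also have "\<dots> \<le> (\<Sum>x<n. \<Sum>y<n. cmod (g x) * cmod (M $$ (x, y)) * cmod (g y))"
    unfolding qf_def sum_distrib_left
    by (rule order_trans[OF norm_sum sum_mono], rule order_trans[OF norm_sum sum_mono]) (simp add: norm_mult)
  also have "\<dots> \<le> (\<Sum>x<n. \<Sum>y<n. K * ((cmod (g x))\<^sup>2 + (cmod (g y))\<^sup>2))"
  proof (intro sum_mono)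
    fix x y assume xy: "x \<in> {..<n}" "y \<in> {..<n}"
    have "cmod (g x) * cmod (g y) \<le> (cmod (g x))\<^sup>2 + (cmod (g y))\<^sup>2"
      by (smt (verit, ccfv_SIG) norm_ge_zero power2_eq_square mult_left_mono mult_right_mono sum_squares_ge_zero)
    moreover have "cmod (M $$ (x, y)) \<le> K" using Kb xy by auto
    moreover note K0
    ultimately have "cmod (M $$ (x, y)) * (cmod (g x) * cmod (g y)) \<le> K * ((cmod (g x))\<^sup>2 + (cmod (g y))\<^sup>2)"
      by (intro mult_mono) auto
    thus "cmod (g x) * cmod (M $$ (x, y)) * cmod (g y) \<le> K * ((cmod (g x))\<^sup>2 + (cmod (g y))\<^sup>2)"
      by (simp add: mult_ac)
  qed
  also have "\<dots> = K * (2 * real n * (\<Sum>x<n. (cmod (g x))\<^sup>2))"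
    by (simp add: sum_distrib_left sum.distrib sum_distrib_right[symmetric] algebra_simps)
  also have "(\<Sum>x<n. (cmod (g x))\<^sup>2) = Re (ip n g g)"
    unfolding ip_self by simp
  finally show ?thesis unfolding K_def by (simp add: mult_ac)
qed


lemma density_gram:
  assumes "density n \<rho>"
  shows "\<exists>w. (\<forall>x<n. \<forall>y<n. \<rho> $$ (x, y) = (\<Sum>i<n. w i x * cnj (w i y))) \<and> (\<Sum>i<n. Re (ip n (w i) (w i))) = 1"
proof -
  have c: "\<rho> \<in> carrier_mat n n" "psd \<rho>" "mtrace \<rho> = 1" using assms unfolding density_def by auto
  obtain w where w: "\<forall>x<n. \<forall>y<n. \<rho> $$ (x, y) = (\<Sum>i<n. w i x * cnj (w i y))" using psd_gram[OF c(2,1)] by blast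
  have "mtrace \<rho> = (\<Sum>x<n. \<Sum>i<n. w i x * cnj (w i x))" unfolding mtrace_def using c(1) w by simp
  also have "\<dots> = (\<Sum>i<n. ip n (w i) (w i))" unfolding ip_def by (subst sum.swap) (simp add: mult.commute)
  finally have "(\<Sum>i<n. ip n (w i) (w i)) = 1" using c(3) by simp
  hence "Re (\<Sum>i<n. ip n (w i) (w i)) = 1" by simp
  thus ?thesis using w by auto
qed

lemma tr_bound:
  assumes "density n \<rho>"
  shows "Re (tr2 n \<rho> M) \<le> 2 * real n * (\<Sum>x<n. \<Sum>y<n. cmod (M $$ (x, y)))"
proof -
  define C where "C = 2 * real n * (\<Sum>x<n. \<Sum>y<n. cmod (M $$ (x, y)))"
  obtain w where w: "\<forall>x<n. \<forall>y<n. \<rho> $$ (x, y) = (\<Sum>i<n. w i x * cnj (w i y))" "(\<Sum>i<n. Re (ip n (w i) (w i))) = 1"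
    using density_gram[OF assms] by blast
  have "Re (tr2 n \<rho> M) = (\<Sum>i<n. Re (qf n M (w i)))"
    using tr_gram[where n=n and R=\<rho> and I="{..<n}" and w=w and M=M] w(1) by simp
  also have "\<dots> \<le> (\<Sum>i<n. C * Re (ip n (w i) (w i)))"
    by (intro sum_mono) (simp add: qf_bound C_def)
  also have "\<dots> = C" using w(2) by (simp add: sum_distrib_left[symmetric])
  finally show ?thesis unfolding C_def .
qed

lemma density_ex:
  assumes "n > 0"
  shows "density n (rk1 n (\<lambda>i. if i = 0 then 1 else 0))"
  unfolding density_def using assms by (auto simp: rk1_psd rk1_trace ip_def)

lemma opt_fid_eq:
  assumes cp: "cpish d N" and d0: "d > 0"
  shows "opt_fid d N = Sup ((\<lambda>\<rho>. sqrt (Re (tr2 (d * d) \<rho> (chi d N)))) ` {\<rho>. density (d * d) \<rho>})"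
proof -
  have 1: "x \<in> (\<lambda>\<rho>. sqrt (Re (tr2 (d * d) \<rho> (chi d N)))) ` {\<rho>. density (d * d) \<rho>}"
    if xin: "x \<in> {fidelity (id_tensor d d d N \<rho>) (maxent d) |\<rho>. density (d * d) \<rho>}" for x
  proof -
    obtain \<rho> where "x = fidelity (id_tensor d d d N \<rho>) (maxent d)" "density (d * d) \<rho>" using xin by blast
    thus ?thesis using fid_formula[OF cp d0] by auto
  qed
  have 2: "x \<in> {fidelity (id_tensor d d d N \<rho>) (maxent d) |\<rho>. density (d * d) \<rho>}"
    if xin: "x \<in> (\<lambda>\<rho>. sqrt (Re (tr2 (d * d) \<rho> (chi d N)))) ` {\<rho>. density (d * d) \<rho>}" for x
  proof -
    obtain \<rho> where "x = sqrt (Re (tr2 (d * d) \<rho> (chi d N)))" "density (d * d) \<rho>" using xin by blast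
    thus ?thesis using fid_formula[OF cp d0, of \<rho>] by (metis (mono_tags, lifting) mem_Collect_eq)
  qed
  have "{fidelity (id_tensor d d d N \<rho>) (maxent d) |\<rho>. density (d * d) \<rho>} =
    (\<lambda>\<rho>. sqrt (Re (tr2 (d * d) \<rho> (chi d N)))) ` {\<rho>. density (d * d) \<rho>}"
    using 1 2 by blast
  thus ?thesis unfolding opt_fid_def by simp
qed

lemma opt_props:
  assumes cp: "cpish d N" and d0: "d > 0"
  shows "\<And>\<rho>. density (d * d) \<rho> \<Longrightarrow> sqrt (Re (tr2 (d * d) \<rho> (chi d N))) \<le> opt_fid d N"
    and "\<And>B. (\<And>\<rho>. density (d * d) \<rho> \<Longrightarrow> sqrt (Re (tr2 (d * d) \<rho> (chi d N))) \<le> B) \<Longrightarrow> opt_fid d N \<le> B"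
    and "opt_fid d N \<ge> 0"
proof -
  define S where "S = (\<lambda>\<rho>. sqrt (Re (tr2 (d * d) \<rho> (chi d N)))) ` {\<rho>. density (d * d) \<rho>}"
  have O: "opt_fid d N = Sup S" unfolding S_def by (rule opt_fid_eq[OF cp d0])
  have ne: "S \<noteq> {}" unfolding S_def using density_ex[of "d * d"] d0 by auto
  have bdd: "bdd_above S"
  proof
    fix x assume "x \<in> S"
    then obtain \<rho> where r: "density (d * d) \<rho>" "x = sqrt (Re (tr2 (d * d) \<rho> (chi d N)))" unfolding S_def by auto
    thus "x \<le> sqrt (2 * real (d * d) * (\<Sum>x<d * d. \<Sum>y<d * d. cmod (chi d N $$ (x, y))))"
      using tr_bound[OF r(1), of "chi d N"] by simp
  qed
  show "\<And>\<rho>. density (d * d) \<rho> \<Longrightarrow> sqrt (Re (tr2 (d * d) \<rho> (chi d N))) \<le> opt_fid d N"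
    unfolding O by (rule cSup_upper[OF _ bdd]) (auto simp: S_def)
  show "\<And>B. (\<And>\<rho>. density (d * d) \<rho> \<Longrightarrow> sqrt (Re (tr2 (d * d) \<rho> (chi d N))) \<le> B) \<Longrightarrow> opt_fid d N \<le> B"
    unfolding O by (rule cSup_least[OF ne]) (auto simp: S_def)
  obtain \<rho>0 where "density (d * d) \<rho>0" using density_ex[of "d * d"] d0 by auto
  hence "sqrt (Re (tr2 (d * d) \<rho>0 (chi d N))) \<in> S" unfolding S_def by auto
  hence "sqrt (Re (tr2 (d * d) \<rho>0 (chi d N))) \<le> Sup S" by (rule cSup_upper[OF _ bdd])
  moreover have "sqrt (Re (tr2 (d * d) \<rho>0 (chi d N))) \<ge> 0"
  proof -
    have "Re (tr2 (d * d) \<rho>0 (chi d N)) \<ge> 0"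
    proof -
      obtain w where w: "\<forall>x<d * d. \<forall>y<d * d. \<rho>0 $$ (x, y) = (\<Sum>i<d * d. w i x * cnj (w i y))"
        using density_gram[OF \<open>density (d * d) \<rho>0\<close>] by blast
      have "Re (tr2 (d * d) \<rho>0 (chi d N)) = (\<Sum>i<d * d. Re (qf (d * d) (chi d N) (w i)))"
        using tr_gram[where n="d * d" and R=\<rho>0 and I="{..<d * d}" and w=w and M="chi d N"] w by simp
      also have "\<dots> \<ge> 0" using psd_qf(2)[OF chi_psd[OF cp d0] chi_carrier] by (simp add: sum_nonneg)
      finally show ?thesis .
    qed
    thus ?thesis by simp
  qed
  ultimately show "opt_fid d N \<ge> 0" unfolding O by linarith
qed

lemma qf_scale: "qf n M (\<lambda>i. of_real t * f i) = of_real (t\<^sup>2) * qf n M f"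
  unfolding qf_def by (simp add: sum_distrib_left mult_ac power2_eq_square)

lemma opt_qf:
  assumes cp: "cpish d N" and d0: "d > 0"
  shows "Re (qf (d * d) (chi d N) u) \<le> (opt_fid d N)\<^sup>2 * Re (ip (d * d) u u)"
proof -
  define n where "n = d * d"
  define s where "s = Re (ip n u u)"
  have ipu: "ip n u u = of_real s" unfolding s_def ip_self by simp
  have s0: "s \<ge> 0" unfolding s_def ip_self by (simp add: sum_nonneg)
  show ?thesis
  proof (cases "s = 0")
    case True
    thus ?thesis using qf_bound[of n "chi d N" u] unfolding s_def n_def by simp
  next
    case False
    hence sp: "s > 0" using s0 by simp
    define t where "t = 1 / sqrt s"
    define v where "v i = of_real t * u i" for i
    have t2: "t\<^sup>2 = 1 / s" unfolding t_def using sp by (simp add: power_divide)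
    have ipv: "ip n v v = 1" unfolding v_def ip_scale ipu t2 using sp by (simp flip: of_real_mult)
    have dv: "density n (rk1 n v)" unfolding density_def using ipv by (simp add: rk1_psd rk1_trace)
    have "sqrt (Re (qf n (chi d N) v)) \<le> opt_fid d N"
      using opt_props(1)[OF cp d0 dv[unfolded n_def]] unfolding qf_as_tr n_def .
    moreover have q0: "Re (qf n (chi d N) v) \<ge> 0" using psd_qf(2)[OF chi_psd[OF cp d0] chi_carrier] unfolding n_def .
    ultimately have "Re (qf n (chi d N) v) \<le> (opt_fid d N)\<^sup>2"
      by (metis real_sqrt_le_iff real_sqrt_pow2 real_sqrt_unique sqrt_le_D)
    moreover have "Re (qf n (chi d N) v) = Re (qf n (chi d N) u) / s"
      unfolding v_def qf_scale t2 by simp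
    ultimately have "Re (qf n (chi d N) u) / s \<le> (opt_fid d N)\<^sup>2" by simp
    thus ?thesis using sp unfolding s_def n_def by (simp add: divide_le_eq mult.commute)
  qed
qed


definition pi1 :: "nat \<Rightarrow> nat \<Rightarrow> nat \<Rightarrow> nat" where
  "pi1 d1 d2 y = (y div (d1 * d2) div d2) * d1 + (y mod (d1 * d2) div d2)"
definition pi2 :: "nat \<Rightarrow> nat \<Rightarrow> nat \<Rightarrow> nat" where
  "pi2 d1 d2 y = (y div (d1 * d2) mod d2) * d2 + (y mod (d1 * d2) mod d2)"
definition enc :: "nat \<Rightarrow> nat \<Rightarrow> nat \<Rightarrow> nat \<Rightarrow> nat" where
  "enc d1 d2 p1 p2 = ((p1 div d1) * d2 + p2 div d2) * (d1 * d2) + ((p1 mod d1) * d2 + p2 mod d2)"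

lemma pi_digits:
  assumes "k2 < d2" "b1 < d1" "b2 < d2"
  shows "pi1 d1 d2 ((k1 * d2 + k2) * (d1 * d2) + (b1 * d2 + b2)) = k1 * d1 + b1"
    "pi2 d1 d2 ((k1 * d2 + k2) * (d1 * d2) + (b1 * d2 + b2)) = k2 * d2 + b2"
proof -
  have "b1 * d2 + b2 < d1 * d2" using assms lt_mult_bound by auto
  thus "pi1 d1 d2 ((k1 * d2 + k2) * (d1 * d2) + (b1 * d2 + b2)) = k1 * d1 + b1"
    "pi2 d1 d2 ((k1 * d2 + k2) * (d1 * d2) + (b1 * d2 + b2)) = k2 * d2 + b2"
    unfolding pi1_def pi2_def using assms by simp_all
qed

lemma reindex:
  fixes h :: "nat \<Rightarrow> nat \<Rightarrow> 'a::comm_monoid_add"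
  shows "(\<Sum>y<(d1 * d2) * (d1 * d2). h (pi1 d1 d2 y) (pi2 d1 d2 y)) = (\<Sum>p1<d1 * d1. \<Sum>p2<d2 * d2. h p1 p2)"
proof -
  have "(\<Sum>y<(d1 * d2) * (d1 * d2). h (pi1 d1 d2 y) (pi2 d1 d2 y)) =
    (\<Sum>k<d1 * d2. \<Sum>b<d1 * d2. h (pi1 d1 d2 (k * (d1 * d2) + b)) (pi2 d1 d2 (k * (d1 * d2) + b)))"
    by (rule sum_split)
  also have "\<dots> = (\<Sum>k1<d1. \<Sum>k2<d2. \<Sum>b<d1 * d2. h (pi1 d1 d2 ((k1 * d2 + k2) * (d1 * d2) + b)) (pi2 d1 d2 ((k1 * d2 + k2) * (d1 * d2) + b)))"
    by (rule sum_split)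
  also have "\<dots> = (\<Sum>k1<d1. \<Sum>k2<d2. \<Sum>b1<d1. \<Sum>b2<d2. h (k1 * d1 + b1) (k2 * d2 + b2))"
  proof (rule sum.cong[OF refl], rule sum.cong[OF refl])
    fix k1 k2 assume k: "k1 \<in> {..<d1}" "k2 \<in> {..<d2}"
    show "(\<Sum>b<d1 * d2. h (pi1 d1 d2 ((k1 * d2 + k2) * (d1 * d2) + b)) (pi2 d1 d2 ((k1 * d2 + k2) * (d1 * d2) + b))) =
      (\<Sum>b1<d1. \<Sum>b2<d2. h (k1 * d1 + b1) (k2 * d2 + b2))"
      by (subst sum_split) (rule sum.cong[OF refl], rule sum.cong[OF refl], use k in \<open>simp add: pi_digits\<close>)
  qed
  also have "\<dots> = (\<Sum>k1<d1. \<Sum>b1<d1. \<Sum>k2<d2. \<Sum>b2<d2. h (k1 * d1 + b1) (k2 * d2 + b2))"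
    by (rule sum.cong[OF refl]) (rule sum.swap)
  also have "\<dots> = (\<Sum>p1<d1 * d1. \<Sum>p2<d2 * d2. h p1 p2)"
    by (simp add: sum_split)
  finally show ?thesis .
qed

lemma pi_facts:
  assumes y: "y < (d1 * d2) * (d1 * d2)"
  shows "pi1 d1 d2 y < d1 * d1" "pi2 d1 d2 y < d2 * d2"
    "pi1 d1 d2 y div d1 = y div (d1 * d2) div d2" "pi1 d1 d2 y mod d1 = y mod (d1 * d2) div d2"
    "pi2 d1 d2 y div d2 = y div (d1 * d2) mod d2" "pi2 d1 d2 y mod d2 = y mod (d1 * d2) mod d2"
    "enc d1 d2 (pi1 d1 d2 y) (pi2 d1 d2 y) = y"
proof -
  define D where "D = d1 * d2"
  have D0: "D > 0" using y unfolding D_def by (cases "d1 * d2") auto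
  hence d0: "d1 > 0" "d2 > 0" unfolding D_def by auto
  have k: "y div D < D" using y D0 unfolding D_def by (simp add: less_mult_imp_div_less)
  have b: "y mod D < D" using D0 by simp
  have k1: "y div D div d2 < d1" using k unfolding D_def by (simp add: less_mult_imp_div_less)
  have b1: "y mod D div d2 < d1" using b unfolding D_def by (simp add: less_mult_imp_div_less)
  have k2: "y div D mod d2 < d2" and b2: "y mod D mod d2 < d2" using d0 by auto
  show "pi1 d1 d2 y < d1 * d1" unfolding pi1_def D_def[symmetric] using lt_mult_bound[OF k1 b1] .
  show "pi2 d1 d2 y < d2 * d2" unfolding pi2_def D_def[symmetric] using lt_mult_bound[OF k2 b2] .
  show "pi1 d1 d2 y div d1 = y div (d1 * d2) div d2" "pi1 d1 d2 y mod d1 = y mod (d1 * d2) div d2"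
    unfolding pi1_def D_def[symmetric] using b1 by simp_all
  show "pi2 d1 d2 y div d2 = y div (d1 * d2) mod d2" "pi2 d1 d2 y mod d2 = y mod (d1 * d2) mod d2"
    unfolding pi2_def D_def[symmetric] using b2 by simp_all
  have "enc d1 d2 (pi1 d1 d2 y) (pi2 d1 d2 y) =
     (y div D div d2 * d2 + y div D mod d2) * D + (y mod D div d2 * d2 + y mod D mod d2)"
    unfolding enc_def pi1_def pi2_def D_def[symmetric] using b1 b2 by simp
  also have "\<dots> = y" by simp
  finally show "enc d1 d2 (pi1 d1 d2 y) (pi2 d1 d2 y) = y" .
qed

lemma linmap_zero:
  assumes "linmap din dout N" "p < dout" "q < dout"
  shows "N (0\<^sub>m din din) $$ (p, q) = 0"
proof -
  have Nc: "N (0\<^sub>m din din) \<in> carrier_mat dout dout" using assms unfolding linmap_def by auto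
  have "(0\<^sub>m din din :: complex mat) = 0 \<cdot>\<^sub>m 0\<^sub>m din din" by (rule eq_matI) auto
  hence "N (0\<^sub>m din din) = 0 \<cdot>\<^sub>m N (0\<^sub>m din din)" using assms unfolding linmap_def
    by (metis zero_carrier_mat)
  hence "N (0\<^sub>m din din) $$ (p, q) = 0 * N (0\<^sub>m din din) $$ (p, q)" using Nc assms
    by (metis carrier_matD(1) carrier_matD(2) index_smult_mat(1))
  thus ?thesis by simp
qed

lemma tc_blk: "tensor_channel d1 d2 N1 N2 X = mat (d1 * d2) (d1 * d2) (\<lambda>(r, c).
      \<Sum>i<d1. \<Sum>j<d1. N1 (mat_unit d1 i j) $$ (r div d2, c div d2) * N2 (blk d2 X i j) $$ (r mod d2, c mod d2))"
  unfolding tensor_channel_def blk_def ..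

lemma tc_linmap:
  assumes L1: "linmap d1 d1 N1" and L2: "linmap d2 d2 N2"
  shows "linmap (d1 * d2) (d1 * d2) (tensor_channel d1 d2 N1 N2)"
proof -
  have N2add: "N2 (A + B) = N2 A + N2 B" "N2 (c \<cdot>\<^sub>m A) = c \<cdot>\<^sub>m N2 A" "N2 A \<in> carrier_mat d2 d2"
    if "A \<in> carrier_mat d2 d2" "B \<in> carrier_mat d2 d2" for A B c
    using L2 that unfolding linmap_def by auto
  have N2dim: "dim_row (N2 (blk d2 X i j)) = d2" "dim_col (N2 (blk d2 X i j)) = d2" for X i j
    using N2add(3)[OF blk_carrier blk_carrier] by auto
  have blk_add: "blk d2 (A + B) i j = blk d2 A i j + blk d2 B i j"
    if "A \<in> carrier_mat (d1 * d2) (d1 * d2)" "B \<in> carrier_mat (d1 * d2) (d1 * d2)" "i < d1" "j < d1" for A B i j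
  proof (rule eq_matI)
    fix a b assume "a < dim_row (blk d2 A i j + blk d2 B i j)" "b < dim_col (blk d2 A i j + blk d2 B i j)"
    hence ab: "a < d2" "b < d2" by (auto simp: blk_def)
    have "i * d2 + a < d1 * d2" "j * d2 + b < d1 * d2" using lt_mult_bound that ab by auto
    thus "blk d2 (A + B) i j $$ (a, b) = (blk d2 A i j + blk d2 B i j) $$ (a, b)"
      using that ab unfolding blk_def by auto
  qed (auto simp: blk_def)
  have blk_sm: "blk d2 (c \<cdot>\<^sub>m A) i j = c \<cdot>\<^sub>m blk d2 A i j"
    if "A \<in> carrier_mat (d1 * d2) (d1 * d2)" "i < d1" "j < d1" for A i j c
  proof (rule eq_matI)
    fix a b assume "a < dim_row (c \<cdot>\<^sub>m blk d2 A i j)" "b < dim_col (c \<cdot>\<^sub>m blk d2 A i j)"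
    hence ab: "a < d2" "b < d2" by (auto simp: blk_def)
    have "i * d2 + a < d1 * d2" "j * d2 + b < d1 * d2" using lt_mult_bound that ab by auto
    thus "blk d2 (c \<cdot>\<^sub>m A) i j $$ (a, b) = (c \<cdot>\<^sub>m blk d2 A i j) $$ (a, b)"
      using that ab unfolding blk_def by auto
  qed (auto simp: blk_def)
  show ?thesis unfolding linmap_def
  proof (intro conjI ballI allI)
    fix A :: "complex mat" assume "A \<in> carrier_mat (d1 * d2) (d1 * d2)"
    show "tensor_channel d1 d2 N1 N2 A \<in> carrier_mat (d1 * d2) (d1 * d2)" unfolding tensor_channel_def by simp
  next
    fix A B :: "complex mat" assume A: "A \<in> carrier_mat (d1 * d2) (d1 * d2)" and B: "B \<in> carrier_mat (d1 * d2) (d1 * d2)"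
    show "tensor_channel d1 d2 N1 N2 (A + B) = tensor_channel d1 d2 N1 N2 A + tensor_channel d1 d2 N1 N2 B"
    proof (rule eq_matI)
      fix r c assume "r < dim_row (tensor_channel d1 d2 N1 N2 A + tensor_channel d1 d2 N1 N2 B)"
        "c < dim_col (tensor_channel d1 d2 N1 N2 A + tensor_channel d1 d2 N1 N2 B)"
      hence rc: "r < d1 * d2" "c < d1 * d2" by (auto simp: tc_blk)
      hence d20: "d2 > 0" by (cases d2) auto
      have m: "r mod d2 < d2" "c mod d2 < d2" using d20 by auto
      show "tensor_channel d1 d2 N1 N2 (A + B) $$ (r, c) = (tensor_channel d1 d2 N1 N2 A + tensor_channel d1 d2 N1 N2 B) $$ (r, c)"
        unfolding tc_blk using rc m
        by (simp add: blk_add[OF A B] N2add(1)[OF blk_carrier blk_carrier] N2dim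
            sum.distrib distrib_left)
    qed (auto simp: tc_blk)
  next
    fix A :: "complex mat" and c assume A: "A \<in> carrier_mat (d1 * d2) (d1 * d2)"
    show "tensor_channel d1 d2 N1 N2 (c \<cdot>\<^sub>m A) = c \<cdot>\<^sub>m tensor_channel d1 d2 N1 N2 A"
    proof (rule eq_matI)
      fix r c' assume "r < dim_row (c \<cdot>\<^sub>m tensor_channel d1 d2 N1 N2 A)" "c' < dim_col (c \<cdot>\<^sub>m tensor_channel d1 d2 N1 N2 A)"
      hence rc: "r < d1 * d2" "c' < d1 * d2" by (auto simp: tc_blk)
      hence d20: "d2 > 0" by (cases d2) auto
      have m: "r mod d2 < d2" "c' mod d2 < d2" using d20 by auto
      show "tensor_channel d1 d2 N1 N2 (c \<cdot>\<^sub>m A) $$ (r, c') = (c \<cdot>\<^sub>m tensor_channel d1 d2 N1 N2 A) $$ (r, c')"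
        unfolding tc_blk using rc m
        by (simp add: blk_sm[OF A] N2add(2)[OF blk_carrier blk_carrier] N2dim
            sum_distrib_left mult_ac)
    qed (auto simp: tc_blk)
  qed
qed


lemma blk_unit:
  assumes "i < d1" "i' < d1" "a < d1 * d2" "b < d1 * d2"
  shows "blk d2 (mat_unit (d1 * d2) a b) i i' =
    (if i = a div d2 \<and> i' = b div d2 then mat_unit d2 (a mod d2) (b mod d2) else 0\<^sub>m d2 d2)"
proof (rule eq_matI)
  fix p q assume "p < dim_row (if i = a div d2 \<and> i' = b div d2 then mat_unit d2 (a mod d2) (b mod d2) else 0\<^sub>m d2 d2)"
    "q < dim_col (if i = a div d2 \<and> i' = b div d2 then mat_unit d2 (a mod d2) (b mod d2) else 0\<^sub>m d2 d2)"
  hence pq: "p < d2" "q < d2" by (auto simp: mat_unit_def split: if_splits)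
  have b1: "i * d2 + p < d1 * d2" "i' * d2 + q < d1 * d2" using lt_mult_bound assms pq by auto
  have e1: "i * d2 + p = a \<longleftrightarrow> i = a div d2 \<and> p = a mod d2" using pq by auto
  have e2: "i' * d2 + q = b \<longleftrightarrow> i' = b div d2 \<and> q = b mod d2" using pq by auto
  show "blk d2 (mat_unit (d1 * d2) a b) i i' $$ (p, q) =
    (if i = a div d2 \<and> i' = b div d2 then mat_unit d2 (a mod d2) (b mod d2) else 0\<^sub>m d2 d2) $$ (p, q)"
    unfolding blk_def mat_unit_def using pq b1 e1 e2 by auto
qed (auto simp: blk_def mat_unit_def)

lemma sum_delta2:
  fixes A B n :: nat and c :: complex
  assumes "A < n" "B < n"
  shows "(\<Sum>i<n. \<Sum>i'<n. if i = A \<and> i' = B then c else 0) = c"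
proof -
  have "(\<Sum>i<n. \<Sum>i'<n. if i = A \<and> i' = B then c else 0) = (\<Sum>i<n. if i = A then c else 0)"
    by (rule sum.cong[OF refl]) (use assms in \<open>auto simp: sum.delta'\<close>)
  also have "\<dots> = c" using assms by simp
  finally show ?thesis .
qed

lemma tc_unit:
  assumes L2: "linmap d2 d2 N2" and ab: "a < d1 * d2" "b < d1 * d2" "j < d1 * d2" "k < d1 * d2"
  shows "tensor_channel d1 d2 N1 N2 (mat_unit (d1 * d2) a b) $$ (j, k) =
    N1 (mat_unit d1 (a div d2) (b div d2)) $$ (j div d2, k div d2) * N2 (mat_unit d2 (a mod d2) (b mod d2)) $$ (j mod d2, k mod d2)"
proof -
  have d20: "d2 > 0" using ab by (cases d2) auto
  have jm: "j mod d2 < d2" "k mod d2 < d2" using d20 by auto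
  have a1: "a div d2 < d1" "b div d2 < d1" using ab by (simp_all add: less_mult_imp_div_less)
  have "tensor_channel d1 d2 N1 N2 (mat_unit (d1 * d2) a b) $$ (j, k) =
     (\<Sum>i<d1. \<Sum>i'<d1. N1 (mat_unit d1 i i') $$ (j div d2, k div d2) * N2 (blk d2 (mat_unit (d1 * d2) a b) i i') $$ (j mod d2, k mod d2))"
    unfolding tc_blk using ab by simp
  also have "\<dots> = (\<Sum>i<d1. \<Sum>i'<d1. if i = a div d2 \<and> i' = b div d2 then
      N1 (mat_unit d1 i i') $$ (j div d2, k div d2) * N2 (mat_unit d2 (a mod d2) (b mod d2)) $$ (j mod d2, k mod d2) else 0)"
    by (intro sum.cong refl) (use ab jm linmap_zero[OF L2 jm] in \<open>simp add: blk_unit\<close>)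
  also have "\<dots> = N1 (mat_unit d1 (a div d2) (b div d2)) $$ (j div d2, k div d2) * N2 (mat_unit d2 (a mod d2) (b mod d2)) $$ (j mod d2, k mod d2)"
  proof -
    have "(\<Sum>i<d1. \<Sum>i'<d1. if i = a div d2 \<and> i' = b div d2 then
      N1 (mat_unit d1 i i') $$ (j div d2, k div d2) * N2 (mat_unit d2 (a mod d2) (b mod d2)) $$ (j mod d2, k mod d2) else 0)
      = (\<Sum>i<d1. \<Sum>i'<d1. if i = a div d2 \<and> i' = b div d2 then
      N1 (mat_unit d1 (a div d2) (b div d2)) $$ (j div d2, k div d2) * N2 (mat_unit d2 (a mod d2) (b mod d2)) $$ (j mod d2, k mod d2) else 0)"
      by (intro sum.cong refl) auto
    thus ?thesis using sum_delta2[OF a1] by simp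
  qed
  finally show ?thesis .
qed

lemma chi_tensor:
  assumes L2: "linmap d2 d2 N2" and yx: "y < (d1 * d2) * (d1 * d2)" "x < (d1 * d2) * (d1 * d2)"
  shows "chi (d1 * d2) (tensor_channel d1 d2 N1 N2) $$ (y, x) =
    chi d1 N1 $$ (pi1 d1 d2 y, pi1 d1 d2 x) * chi d2 N2 $$ (pi2 d1 d2 y, pi2 d1 d2 x)"
proof -
  have D0: "d1 * d2 > 0" using yx by (cases "d1 * d2") auto
  have bnd: "x mod (d1 * d2) < d1 * d2" "y mod (d1 * d2) < d1 * d2" "x div (d1 * d2) < d1 * d2" "y div (d1 * d2) < d1 * d2"
    using D0 yx by (auto simp: less_mult_imp_div_less)
  note py = pi_facts[OF yx(1)] and px = pi_facts[OF yx(2)]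
  have "chi (d1 * d2) (tensor_channel d1 d2 N1 N2) $$ (y, x) =
     tensor_channel d1 d2 N1 N2 (mat_unit (d1 * d2) (x mod (d1 * d2)) (y mod (d1 * d2))) $$ (x div (d1 * d2), y div (d1 * d2)) / of_nat (d1 * d2)"
    unfolding chi_def using yx by simp
  also have "\<dots> = N1 (mat_unit d1 (x mod (d1 * d2) div d2) (y mod (d1 * d2) div d2)) $$ (x div (d1 * d2) div d2, y div (d1 * d2) div d2) *
      N2 (mat_unit d2 (x mod (d1 * d2) mod d2) (y mod (d1 * d2) mod d2)) $$ (x div (d1 * d2) mod d2, y div (d1 * d2) mod d2) / of_nat (d1 * d2)"
    using tc_unit[OF L2 bnd] by simp
  also have "\<dots> = chi d1 N1 $$ (pi1 d1 d2 y, pi1 d1 d2 x) * chi d2 N2 $$ (pi2 d1 d2 y, pi2 d1 d2 x)"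
    unfolding chi_def using py px by simp
  finally show ?thesis .
qed


definition sig :: "nat \<Rightarrow> nat \<Rightarrow> nat \<Rightarrow> nat" where
  "sig d1 d2 R = (R div (d1 * d2) * d2 + R mod (d1 * d2) mod d2) * d1 + R mod (d1 * d2) div d2"
definition tau :: "nat \<Rightarrow> nat \<Rightarrow> nat \<Rightarrow> nat" where
  "tau d1 d2 t = (t div d1 div d2) * (d1 * d2) + ((t mod d1) * d2 + t div d1 mod d2)"

lemma sig_tau:
  assumes R: "R < n * (d1 * d2)" and t: "t < n * d2 * d1"
  shows "sig d1 d2 R < n * d2 * d1" "tau d1 d2 (sig d1 d2 R) = R"
    "tau d1 d2 t < n * (d1 * d2)" "sig d1 d2 (tau d1 d2 t) = t"
proof -
  have D0: "d1 * d2 > 0" using R by (cases "d1 * d2") auto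
  hence d0: "d1 > 0" "d2 > 0" by auto
  define r0 b where "r0 = R div (d1 * d2)" and "b = R mod (d1 * d2)"
  have r0: "r0 < n" unfolding r0_def using R by (simp add: less_mult_imp_div_less mult.commute)
  have b: "b < d1 * d2" unfolding b_def using D0 by simp
  have b1: "b div d2 < d1" using b by (simp add: less_mult_imp_div_less)
  have b2: "b mod d2 < d2" using d0 by simp
  have u: "r0 * d2 + b mod d2 < n * d2" using lt_mult_bound[OF r0 b2] .
  show "sig d1 d2 R < n * d2 * d1" unfolding sig_def r0_def[symmetric] b_def[symmetric]
    using lt_mult_bound[OF u b1] .
  show "tau d1 d2 (sig d1 d2 R) = R" unfolding sig_def tau_def r0_def[symmetric] b_def[symmetric]
    using b1 b2 by (simp add: r0_def b_def div_mult_mod_eq)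
  define u' p where "u' = t div d1" and "p = t mod d1"
  have p: "p < d1" unfolding p_def using d0 by simp
  have u': "u' < n * d2" unfolding u'_def using t by (simp add: less_mult_imp_div_less)
  have r0': "u' div d2 < n" using u' by (simp add: less_mult_imp_div_less)
  have g: "u' mod d2 < d2" using d0 by simp
  have pg: "p * d2 + u' mod d2 < d1 * d2" using lt_mult_bound[OF p g] .
  show "tau d1 d2 t < n * (d1 * d2)" unfolding tau_def u'_def[symmetric] p_def[symmetric]
    using lt_mult_bound[OF r0' pg] .
  show "sig d1 d2 (tau d1 d2 t) = t" unfolding sig_def tau_def u'_def[symmetric] p_def[symmetric]
    using pg g p by (simp add: u'_def p_def)
qed

lemma sig_facts:
  assumes R: "R < n * (d1 * d2)"
  shows "sig d1 d2 R < n * d2 * d1" "tau d1 d2 (sig d1 d2 R) = R"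
proof -
  have "0 < n * d2 * d1" using R by (cases "n * d2 * d1") (auto simp: mult_ac)
  then show "sig d1 d2 R < n * d2 * d1" "tau d1 d2 (sig d1 d2 R) = R" using sig_tau[OF R, of 0] by auto
qed

lemma tau_facts:
  assumes t: "t < n * d2 * d1"
  shows "tau d1 d2 t < n * (d1 * d2)" "sig d1 d2 (tau d1 d2 t) = t"
proof -
  have "0 < n * (d1 * d2)" using t by (cases "n * (d1 * d2)") (auto simp: mult_ac)
  then show "tau d1 d2 t < n * (d1 * d2)" "sig d1 d2 (tau d1 d2 t) = t" using sig_tau[OF _ t, of 0] by auto
qed

lemma reindex_tau:
  shows "(\<Sum>R<n * (d1 * d2). g R) = (\<Sum>t<n * d2 * d1. g (tau d1 d2 t))"
  by (rule sum.reindex_bij_witness[where i="tau d1 d2" and j="sig d1 d2"]) (auto simp: sig_facts tau_facts)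


lemma tc_entry:
  assumes Q1: "quantum_channel d1 d1 N1" and Q2: "quantum_channel d2 d2 N2"
    and X: "X \<in> carrier_mat (n * (d1 * d2)) (n * (d1 * d2))" and pX: "psd X"
  shows "\<exists>V L. (\<forall>l. psd (V l) \<and> V l \<in> carrier_mat (n * d2 * d1) (n * d2 * d1)) \<and>
    (\<forall>R < n * (d1 * d2). \<forall>C < n * (d1 * d2).
       id_tensor n (d1 * d2) (d1 * d2) (tensor_channel d1 d2 N1 N2) X $$ (R, C) =
       (\<Sum>l<(L::nat). V l $$ (sig d1 d2 R, sig d1 d2 C)))"
proof -
  have L1: "linmap d1 d1 N1" using qc_linmap[OF Q1] .
  have CP1: "\<And>m Z. Z \<in> carrier_mat (m * d1) (m * d1) \<Longrightarrow> psd Z \<Longrightarrow> psd (id_tensor m d1 d1 N1 Z)"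
    using Q1 unfolding quantum_channel_def by blast
  have CP2: "\<And>m Z. Z \<in> carrier_mat (m * d2) (m * d2) \<Longrightarrow> psd Z \<Longrightarrow> psd (id_tensor m d2 d2 N2 Z)"
    using Q2 unfolding quantum_channel_def by blast
  have X': "X \<in> carrier_mat (n * d1 * d2) (n * d1 * d2)" using X by (simp add: mult.assoc)
  define X2 where "X2 = id_tensor (n * d1) d2 d2 N2 X"
  have pX2: "psd X2" unfolding X2_def by (rule CP2[OF X' pX])
  have X2c: "X2 \<in> carrier_mat (n * d1 * d2) (n * d1 * d2)" unfolding X2_def id_tensor_def by simp
  obtain z where z: "\<forall>u<n * d1 * d2. \<forall>v<n * d1 * d2. X2 $$ (u, v) = (\<Sum>l<n * d1 * d2. z l u * cnj (z l v))"
    using psd_gram[OF pX2 X2c] by blast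
  define H where "H l t = z l ((t div d1 div d2 * d1 + t mod d1) * d2 + t div d1 mod d2)" for l t
  define V where "V l = id_tensor (n * d2) d1 d1 N1 (rk1 (n * d2 * d1) (H l))" for l
  have Vp: "psd (V l) \<and> V l \<in> carrier_mat (n * d2 * d1) (n * d2 * d1)" for l
    unfolding V_def using CP1[OF rk1_carrier(1) rk1_psd] by (simp add: id_tensor_def)
  have main: "id_tensor n (d1 * d2) (d1 * d2) (tensor_channel d1 d2 N1 N2) X $$ (R, C) =
       (\<Sum>l<n * d1 * d2. V l $$ (sig d1 d2 R, sig d1 d2 C))"
    if R: "R < n * (d1 * d2)" and C: "C < n * (d1 * d2)" for R C
  proof -
    have D0: "d1 * d2 > 0" using R by (cases "d1 * d2") auto
    hence d0: "d1 > 0" "d2 > 0" by auto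
    define r0 b c0 b' where "r0 = R div (d1 * d2)" and "b = R mod (d1 * d2)"
      and "c0 = C div (d1 * d2)" and "b' = C mod (d1 * d2)"
    have r0: "r0 < n" "c0 < n" unfolding r0_def c0_def using R C by (simp_all add: less_mult_imp_div_less mult.commute)
    have bb: "b < d1 * d2" "b' < d1 * d2" unfolding b_def b'_def using D0 by simp_all
    have b1: "b div d2 < d1" "b' div d2 < d1" using bb by (simp_all add: less_mult_imp_div_less)
    have b2: "b mod d2 < d2" "b' mod d2 < d2" using d0 by simp_all
    have s1: "id_tensor n (d1 * d2) (d1 * d2) (tensor_channel d1 d2 N1 N2) X $$ (R, C) =
        tensor_channel d1 d2 N1 N2 (blk (d1 * d2) X r0 c0) $$ (b, b')"
      unfolding id_tensor_def blk_def r0_def b_def c0_def b'_def using R C by simp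
    have s3: "blk d2 (blk (d1 * d2) X r0 c0) i i' = blk d2 X (r0 * d1 + i) (c0 * d1 + i')"
      if ii: "i < d1" "i' < d1" for i i'
    proof (rule eq_matI)
      fix a a' assume "a < dim_row (blk d2 X (r0 * d1 + i) (c0 * d1 + i'))" "a' < dim_col (blk d2 X (r0 * d1 + i) (c0 * d1 + i'))"
      hence aa: "a < d2" "a' < d2" by (auto simp: blk_def)
      have bd: "i * d2 + a < d1 * d2" "i' * d2 + a' < d1 * d2" using lt_mult_bound ii aa by auto
      have eqs: "r0 * (d1 * d2) + (i * d2 + a) = (r0 * d1 + i) * d2 + a"
        "c0 * (d1 * d2) + (i' * d2 + a') = (c0 * d1 + i') * d2 + a'" by (simp_all add: algebra_simps)
      have "blk d2 (blk (d1 * d2) X r0 c0) i i' $$ (a, a') = X $$ (r0 * (d1 * d2) + (i * d2 + a), c0 * (d1 * d2) + (i' * d2 + a'))"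
        unfolding blk_def using aa bd by simp
      also have "\<dots> = X $$ ((r0 * d1 + i) * d2 + a, (c0 * d1 + i') * d2 + a')" by (simp only: eqs)
      also have "\<dots> = blk d2 X (r0 * d1 + i) (c0 * d1 + i') $$ (a, a')" unfolding blk_def using aa by simp
      finally show "blk d2 (blk (d1 * d2) X r0 c0) i i' $$ (a, a') = blk d2 X (r0 * d1 + i) (c0 * d1 + i') $$ (a, a')" .
    qed (auto simp: blk_def)
    have s45: "N2 (blk d2 X (r0 * d1 + i) (c0 * d1 + i')) $$ (b mod d2, b' mod d2) =
       (\<Sum>l<n * d1 * d2. z l ((r0 * d1 + i) * d2 + b mod d2) * cnj (z l ((c0 * d1 + i') * d2 + b' mod d2)))"
      if ii: "i < d1" "i' < d1" for i i'
    proof -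
      have u: "r0 * d1 + i < n * d1" "c0 * d1 + i' < n * d1" using lt_mult_bound r0 ii by auto
      have "N2 (blk d2 X (r0 * d1 + i) (c0 * d1 + i')) $$ (b mod d2, b' mod d2) = X2 $$ ((r0 * d1 + i) * d2 + b mod d2, (c0 * d1 + i') * d2 + b' mod d2)"
        unfolding X2_def by (rule id_tensor_digit[symmetric]) (use u b2 in auto)
      moreover have "(r0 * d1 + i) * d2 + b mod d2 < n * d1 * d2" "(c0 * d1 + i') * d2 + b' mod d2 < n * d1 * d2"
        using lt_mult_bound u b2 by auto
      ultimately show ?thesis using z by simp
    qed
    have "id_tensor n (d1 * d2) (d1 * d2) (tensor_channel d1 d2 N1 N2) X $$ (R, C) =
      (\<Sum>i<d1. \<Sum>i'<d1. N1 (mat_unit d1 i i') $$ (b div d2, b' div d2) *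
        (\<Sum>l<n * d1 * d2. z l ((r0 * d1 + i) * d2 + b mod d2) * cnj (z l ((c0 * d1 + i') * d2 + b' mod d2))))"
    proof -
      have "tensor_channel d1 d2 N1 N2 (blk (d1 * d2) X r0 c0) $$ (b, b') =
        (\<Sum>i<d1. \<Sum>j<d1. N1 (mat_unit d1 i j) $$ (b div d2, b' div d2) *
               N2 (blk d2 (blk (d1 * d2) X r0 c0) i j) $$ (b mod d2, b' mod d2))"
        unfolding tc_blk using bb by simp
      also have "\<dots> = (\<Sum>i<d1. \<Sum>i'<d1. N1 (mat_unit d1 i i') $$ (b div d2, b' div d2) *
        (\<Sum>l<n * d1 * d2. z l ((r0 * d1 + i) * d2 + b mod d2) * cnj (z l ((c0 * d1 + i') * d2 + b' mod d2))))"
        by (intro sum.cong refl) (simp add: s3 s45)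
      finally show ?thesis unfolding s1 .
    qed
    also have "\<dots> = (\<Sum>l<n * d1 * d2. \<Sum>i<d1. \<Sum>i'<d1.
        (z l ((r0 * d1 + i) * d2 + b mod d2) * cnj (z l ((c0 * d1 + i') * d2 + b' mod d2))) * N1 (mat_unit d1 i i') $$ (b div d2, b' div d2))"
    proof -
      have "(\<Sum>i<d1. \<Sum>i'<d1. N1 (mat_unit d1 i i') $$ (b div d2, b' div d2) *
        (\<Sum>l<n * d1 * d2. z l ((r0 * d1 + i) * d2 + b mod d2) * cnj (z l ((c0 * d1 + i') * d2 + b' mod d2))))
        = (\<Sum>i<d1. \<Sum>i'<d1. \<Sum>l<n * d1 * d2. (z l ((r0 * d1 + i) * d2 + b mod d2) * cnj (z l ((c0 * d1 + i') * d2 + b' mod d2))) * N1 (mat_unit d1 i i') $$ (b div d2, b' div d2))"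
        by (simp add: sum_distrib_left mult.commute)
      also have "\<dots> = (\<Sum>i<d1. \<Sum>l<n * d1 * d2. \<Sum>i'<d1. (z l ((r0 * d1 + i) * d2 + b mod d2) * cnj (z l ((c0 * d1 + i') * d2 + b' mod d2))) * N1 (mat_unit d1 i i') $$ (b div d2, b' div d2))"
        by (rule sum.cong[OF refl]) (rule sum.swap)
      also have "\<dots> = (\<Sum>l<n * d1 * d2. \<Sum>i<d1. \<Sum>i'<d1. (z l ((r0 * d1 + i) * d2 + b mod d2) * cnj (z l ((c0 * d1 + i') * d2 + b' mod d2))) * N1 (mat_unit d1 i i') $$ (b div d2, b' div d2))"
        by (rule sum.swap)
      finally show ?thesis .
    qed
    also have "\<dots> = (\<Sum>l<n * d1 * d2. V l $$ (sig d1 d2 R, sig d1 d2 C))"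
    proof (rule sum.cong[OF refl])
      fix l assume "l \<in> {..<n * d1 * d2}"
      define Z where "Z = mat d1 d1 (\<lambda>(i, i'). z l ((r0 * d1 + i) * d2 + b mod d2) * cnj (z l ((c0 * d1 + i') * d2 + b' mod d2)))"
      have "(\<Sum>i<d1. \<Sum>i'<d1. (z l ((r0 * d1 + i) * d2 + b mod d2) * cnj (z l ((c0 * d1 + i') * d2 + b' mod d2))) * N1 (mat_unit d1 i i') $$ (b div d2, b' div d2))
        = N1 Z $$ (b div d2, b' div d2)"
        by (subst chan_lin[OF L1 _ b1]) (auto simp: Z_def intro!: sum.cong)
      also have "\<dots> = V l $$ (sig d1 d2 R, sig d1 d2 C)"
      proof -
        have u: "r0 * d2 + b mod d2 < n * d2" "c0 * d2 + b' mod d2 < n * d2" using lt_mult_bound r0 b2 by auto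
        have sR: "sig d1 d2 R = (r0 * d2 + b mod d2) * d1 + b div d2" "sig d1 d2 C = (c0 * d2 + b' mod d2) * d1 + b' div d2"
          unfolding sig_def r0_def b_def c0_def b'_def by (rule refl)+
        have bZ: "blk d1 (rk1 (n * d2 * d1) (H l)) (r0 * d2 + b mod d2) (c0 * d2 + b' mod d2) = Z"
        proof (rule eq_matI)
          fix i i' assume "i < dim_row Z" "i' < dim_col Z"
          hence ii: "i < d1" "i' < d1" by (auto simp: Z_def)
          have "(r0 * d2 + b mod d2) * d1 + i < n * d2 * d1" "(c0 * d2 + b' mod d2) * d1 + i' < n * d2 * d1"
            using lt_mult_bound u ii by auto
          thus "blk d1 (rk1 (n * d2 * d1) (H l)) (r0 * d2 + b mod d2) (c0 * d2 + b' mod d2) $$ (i, i') = Z $$ (i, i')"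
            unfolding blk_def Z_def H_def using ii b2 by simp
        qed (simp_all add: blk_def Z_def)
        have "V l $$ (sig d1 d2 R, sig d1 d2 C) = N1 (blk d1 (rk1 (n * d2 * d1) (H l)) (r0 * d2 + b mod d2) (c0 * d2 + b' mod d2)) $$ (b div d2, b' div d2)"
          unfolding sR V_def by (rule id_tensor_digit) (use u b1 in auto)
        thus ?thesis unfolding bZ by simp
      qed
      finally show "(\<Sum>i<d1. \<Sum>i'<d1. (z l ((r0 * d1 + i) * d2 + b mod d2) * cnj (z l ((c0 * d1 + i') * d2 + b' mod d2))) * N1 (mat_unit d1 i i') $$ (b div d2, b' div d2))
        = V l $$ (sig d1 d2 R, sig d1 d2 C)" .
    qed
    finally show ?thesis .
  qed
  have "(\<forall>l. psd (V l) \<and> V l \<in> carrier_mat (n * d2 * d1) (n * d2 * d1)) \<and>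
    (\<forall>R < n * (d1 * d2). \<forall>C < n * (d1 * d2).
       id_tensor n (d1 * d2) (d1 * d2) (tensor_channel d1 d2 N1 N2) X $$ (R, C) =
       (\<Sum>l<n * d1 * d2. V l $$ (sig d1 d2 R, sig d1 d2 C)))"
    using Vp main by simp
  thus ?thesis by blast
qed

lemma tc_psd:
  assumes Q1: "quantum_channel d1 d1 N1" and Q2: "quantum_channel d2 d2 N2"
    and X: "X \<in> carrier_mat (n * (d1 * d2)) (n * (d1 * d2))" and pX: "psd X"
  shows "psd (id_tensor n (d1 * d2) (d1 * d2) (tensor_channel d1 d2 N1 N2) X)"
proof -
  define Y where "Y = id_tensor n (d1 * d2) (d1 * d2) (tensor_channel d1 d2 N1 N2) X"
  obtain V and L :: nat where VL: "\<forall>l. psd (V l) \<and> V l \<in> carrier_mat (n * d2 * d1) (n * d2 * d1)"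
    "\<forall>R < n * (d1 * d2). \<forall>C < n * (d1 * d2). Y $$ (R, C) = (\<Sum>l<L. V l $$ (sig d1 d2 R, sig d1 d2 C))"
    using tc_entry[OF Q1 Q2 X pX] unfolding Y_def by blast
  have Yc: "Y \<in> carrier_mat (n * (d1 * d2)) (n * (d1 * d2))" unfolding Y_def id_tensor_def by simp
  have "psd Y"
  proof (rule psdI[OF Yc])
    fix f :: "nat \<Rightarrow> complex"
    define g where "g t = f (tau d1 d2 t)" for t
    have "qf (n * (d1 * d2)) Y f = (\<Sum>t<n * d2 * d1. cnj (g t) * (\<Sum>C<n * (d1 * d2). Y $$ (tau d1 d2 t, C) * f C))"
      unfolding qf_def g_def by (rule reindex_tau)
    also have "\<dots> = (\<Sum>t<n * d2 * d1. cnj (g t) * (\<Sum>t'<n * d2 * d1. (\<Sum>l<L. V l $$ (t, t')) * g t'))"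
    proof (rule sum.cong[OF refl])
      fix t assume t: "t \<in> {..<n * d2 * d1}"
      have "(\<Sum>C<n * (d1 * d2). Y $$ (tau d1 d2 t, C) * f C) = (\<Sum>t'<n * d2 * d1. Y $$ (tau d1 d2 t, tau d1 d2 t') * f (tau d1 d2 t'))"
        by (rule reindex_tau)
      also have "\<dots> = (\<Sum>t'<n * d2 * d1. (\<Sum>l<L. V l $$ (t, t')) * g t')"
      proof (rule sum.cong[OF refl])
        fix t' assume t': "t' \<in> {..<n * d2 * d1}"
        show "Y $$ (tau d1 d2 t, tau d1 d2 t') * f (tau d1 d2 t') = (\<Sum>l<L. V l $$ (t, t')) * g t'"
          using VL(2) tau_facts[of t n d2 d1] tau_facts[of t' n d2 d1] t t' unfolding g_def by simp
      qed
      finally show "cnj (g t) * (\<Sum>C<n * (d1 * d2). Y $$ (tau d1 d2 t, C) * f C) =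
          cnj (g t) * (\<Sum>t'<n * d2 * d1. (\<Sum>l<L. V l $$ (t, t')) * g t')" by simp
    qed
    also have "\<dots> = (\<Sum>l<L. qf (n * d2 * d1) (V l) g)"
      unfolding qf_def by (simp add: sum_distrib_left sum_distrib_right sum.swap[of _ "{..<L}"] mult_ac)
    finally have eq: "qf (n * (d1 * d2)) Y f = (\<Sum>l<L. qf (n * d2 * d1) (V l) g)" .
    have "Im (qf (n * d2 * d1) (V l) g) = 0" "Re (qf (n * d2 * d1) (V l) g) \<ge> 0" for l
      using psd_qf[of "V l" "n * d2 * d1" g] VL(1) by auto
    thus "Im (qf (n * (d1 * d2)) Y f) = 0 \<and> 0 \<le> Re (qf (n * (d1 * d2)) Y f)"
      unfolding eq by (simp add: sum_nonneg)
  qed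
  thus ?thesis unfolding Y_def .
qed


lemma kron_ineq:
  fixes A B :: "complex mat" and G :: "nat \<Rightarrow> nat \<Rightarrow> complex"
  assumes Bc: "B \<in> carrier_mat m2 m2" and pB: "psd B" and l1: "lam1 \<ge> 0"
    and hA: "\<And>u. Re (qf m1 A u) \<le> lam1 * Re (ip m1 u u)"
    and hB: "\<And>v. Re (qf m2 B v) \<le> lam2 * Re (ip m2 v v)"
  shows "Re (\<Sum>p1<m1. \<Sum>p2<m2. \<Sum>q1<m1. \<Sum>q2<m2. cnj (G p1 p2) * A $$ (p1, q1) * B $$ (p2, q2) * G q1 q2)
    \<le> lam1 * lam2 * (\<Sum>p1<m1. \<Sum>p2<m2. (cmod (G p1 p2))\<^sup>2)"
proof -
  obtain z where z: "\<forall>x<m2. \<forall>y<m2. B $$ (x, y) = (\<Sum>l<m2. z l x * cnj (z l y))"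
    using psd_gram[OF pB Bc] by blast
  define u where "u l q1 = (\<Sum>q2<m2. cnj (z l q2) * G q1 q2)" for l q1
  define T where "T p1 q1 = (\<Sum>p2<m2. \<Sum>q2<m2. cnj (G p1 p2) * B $$ (p2, q2) * G q1 q2)" for p1 q1
  have S1: "(\<Sum>p1<m1. \<Sum>p2<m2. \<Sum>q1<m1. \<Sum>q2<m2. cnj (G p1 p2) * A $$ (p1, q1) * B $$ (p2, q2) * G q1 q2)
      = (\<Sum>p1<m1. \<Sum>q1<m1. A $$ (p1, q1) * T p1 q1)"
  proof (rule sum.cong[OF refl])
    fix p1 assume "p1 \<in> {..<m1}"
    have "(\<Sum>p2<m2. \<Sum>q1<m1. \<Sum>q2<m2. cnj (G p1 p2) * A $$ (p1, q1) * B $$ (p2, q2) * G q1 q2)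
       = (\<Sum>q1<m1. \<Sum>p2<m2. \<Sum>q2<m2. cnj (G p1 p2) * A $$ (p1, q1) * B $$ (p2, q2) * G q1 q2)"
      by (rule sum.swap)
    also have "\<dots> = (\<Sum>q1<m1. A $$ (p1, q1) * T p1 q1)"
      unfolding T_def by (simp add: sum_distrib_left mult_ac)
    finally show "(\<Sum>p2<m2. \<Sum>q1<m1. \<Sum>q2<m2. cnj (G p1 p2) * A $$ (p1, q1) * B $$ (p2, q2) * G q1 q2)
       = (\<Sum>q1<m1. A $$ (p1, q1) * T p1 q1)" .
  qed
  have T: "T p1 q1 = (\<Sum>l<m2. cnj (u l p1) * u l q1)" for p1 q1
  proof -
    have "(\<Sum>l<m2. cnj (u l p1) * u l q1) = (\<Sum>l<m2. \<Sum>p2<m2. \<Sum>q2<m2. cnj (G p1 p2) * (z l p2 * cnj (z l q2)) * G q1 q2)"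
      unfolding u_def by (simp add: sum_distrib_left sum_distrib_right mult_ac)
    also have "\<dots> = (\<Sum>p2<m2. \<Sum>l<m2. \<Sum>q2<m2. cnj (G p1 p2) * (z l p2 * cnj (z l q2)) * G q1 q2)"
      by (rule sum.swap)
    also have "\<dots> = (\<Sum>p2<m2. \<Sum>q2<m2. \<Sum>l<m2. cnj (G p1 p2) * (z l p2 * cnj (z l q2)) * G q1 q2)"
      by (rule sum.cong[OF refl]) (rule sum.swap)
    also have "\<dots> = T p1 q1"
      unfolding T_def using z by (intro sum.cong refl) (simp add: sum_distrib_left sum_distrib_right)
    finally show ?thesis by simp
  qed
  have S2: "(\<Sum>p1<m1. \<Sum>q1<m1. A $$ (p1, q1) * T p1 q1) = (\<Sum>l<m2. qf m1 A (u l))"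
  proof -
    have "(\<Sum>p1<m1. \<Sum>q1<m1. A $$ (p1, q1) * T p1 q1) = (\<Sum>p1<m1. \<Sum>q1<m1. \<Sum>l<m2. cnj (u l p1) * (A $$ (p1, q1) * u l q1))"
      unfolding T by (simp add: sum_distrib_left mult_ac)
    also have "\<dots> = (\<Sum>p1<m1. \<Sum>l<m2. \<Sum>q1<m1. cnj (u l p1) * (A $$ (p1, q1) * u l q1))"
      by (rule sum.cong[OF refl]) (rule sum.swap)
    also have "\<dots> = (\<Sum>l<m2. \<Sum>p1<m1. \<Sum>q1<m1. cnj (u l p1) * (A $$ (p1, q1) * u l q1))"
      by (rule sum.swap)
    also have "\<dots> = (\<Sum>l<m2. qf m1 A (u l))"
      unfolding qf_def by (simp add: sum_distrib_left)
    finally show ?thesis .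
  qed
  have "Re (\<Sum>l<m2. qf m1 A (u l)) \<le> (\<Sum>l<m2. lam1 * Re (ip m1 (u l) (u l)))"
    unfolding Re_sum by (intro sum_mono hA)
  also have "\<dots> = lam1 * (\<Sum>q1<m1. \<Sum>l<m2. (cmod (u l q1))\<^sup>2)"
    unfolding ip_self by (simp add: sum_distrib_left sum.swap[of _ "{..<m2}"])
  also have "(\<Sum>q1<m1. \<Sum>l<m2. (cmod (u l q1))\<^sup>2) = (\<Sum>q1<m1. Re (qf m2 B (G q1)))"
  proof (rule sum.cong[OF refl])
    fix q1
    have "qf m2 B (G q1) = of_real (\<Sum>l<m2. (cmod (\<Sum>y<m2. cnj (z l y) * G q1 y))\<^sup>2)"
      by (rule gram_qf) (use z in auto)
    thus "(\<Sum>l<m2. (cmod (u l q1))\<^sup>2) = Re (qf m2 B (G q1))" unfolding u_def by simp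
  qed
  also have "lam1 * (\<Sum>q1<m1. Re (qf m2 B (G q1))) \<le> lam1 * (\<Sum>q1<m1. lam2 * Re (ip m2 (G q1) (G q1)))"
    by (intro mult_left_mono[OF _ l1] sum_mono hB)
  also have "\<dots> = lam1 * lam2 * (\<Sum>p1<m1. \<Sum>p2<m2. (cmod (G p1 p2))\<^sup>2)"
    unfolding ip_self by (simp add: sum_distrib_left mult_ac)
  finally show ?thesis unfolding S1 S2 .
qed


lemma reindex2:
  fixes F :: "nat \<Rightarrow> nat \<Rightarrow> nat \<Rightarrow> nat \<Rightarrow> 'a::comm_monoid_add"
  shows "(\<Sum>x<(d1 * d2) * (d1 * d2). \<Sum>y<(d1 * d2) * (d1 * d2). F (pi1 d1 d2 x) (pi2 d1 d2 x) (pi1 d1 d2 y) (pi2 d1 d2 y))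
    = (\<Sum>p1<d1 * d1. \<Sum>p2<d2 * d2. \<Sum>q1<d1 * d1. \<Sum>q2<d2 * d2. F p1 p2 q1 q2)"
proof -
  have "(\<Sum>x<(d1 * d2) * (d1 * d2). \<Sum>y<(d1 * d2) * (d1 * d2). F (pi1 d1 d2 x) (pi2 d1 d2 x) (pi1 d1 d2 y) (pi2 d1 d2 y))
     = (\<Sum>x<(d1 * d2) * (d1 * d2). \<Sum>q1<d1 * d1. \<Sum>q2<d2 * d2. F (pi1 d1 d2 x) (pi2 d1 d2 x) q1 q2)"
    by (rule sum.cong[OF refl]) (rule reindex)
  also have "\<dots> = (\<Sum>p1<d1 * d1. \<Sum>p2<d2 * d2. \<Sum>q1<d1 * d1. \<Sum>q2<d2 * d2. F p1 p2 q1 q2)"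
    by (rule reindex)
  finally show ?thesis .
qed

lemma tr2_real:
  assumes cp: "cpish d N" and d0: "d > 0" and rho: "density (d * d) \<rho>"
  shows "Im (tr2 (d * d) \<rho> (chi d N)) = 0" "Re (tr2 (d * d) \<rho> (chi d N)) \<ge> 0"
proof -
  obtain w where w: "\<forall>x<d * d. \<forall>y<d * d. \<rho> $$ (x, y) = (\<Sum>i<d * d. w i x * cnj (w i y))"
    using density_gram[OF rho] by blast
  have eq: "tr2 (d * d) \<rho> (chi d N) = (\<Sum>i<d * d. qf (d * d) (chi d N) (w i))"
    using tr_gram[where n="d * d" and R=\<rho> and I="{..<d * d}" and w=w and M="chi d N"] w by simp
  note q = psd_qf[OF chi_psd[OF cp d0] chi_carrier]
  show "Im (tr2 (d * d) \<rho> (chi d N)) = 0" "Re (tr2 (d * d) \<rho> (chi d N)) \<ge> 0"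
    unfolding eq using q by (auto simp: sum_nonneg)
qed

lemma chi12_qf:
  assumes Q1: "quantum_channel d1 d1 N1" and Q2: "quantum_channel d2 d2 N2" and d0: "d1 > 0" "d2 > 0"
  shows "Re (qf ((d1 * d2) * (d1 * d2)) (chi (d1 * d2) (tensor_channel d1 d2 N1 N2)) g)
     \<le> (opt_fid d1 N1)\<^sup>2 * (opt_fid d2 N2)\<^sup>2 * Re (ip ((d1 * d2) * (d1 * d2)) g g)"
proof -
  define D where "D = (d1 * d2) * (d1 * d2)"
  define G where "G p1 p2 = g (enc d1 d2 p1 p2)" for p1 p2
  have gG: "g x = G (pi1 d1 d2 x) (pi2 d1 d2 x)" if "x < D" for x
    unfolding G_def using pi_facts(7)[of x d1 d2] that unfolding D_def by simp
  have L2: "linmap d2 d2 N2" by (rule qc_linmap[OF Q2])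
  have "qf D (chi (d1 * d2) (tensor_channel d1 d2 N1 N2)) g =
    (\<Sum>y<D. \<Sum>x<D. cnj (G (pi1 d1 d2 y) (pi2 d1 d2 y)) * (chi d1 N1 $$ (pi1 d1 d2 y, pi1 d1 d2 x) * chi d2 N2 $$ (pi2 d1 d2 y, pi2 d1 d2 x) * G (pi1 d1 d2 x) (pi2 d1 d2 x)))"
    unfolding qf_def sum_distrib_left
    by (intro sum.cong refl) (simp add: gG chi_tensor[OF L2] D_def)
  also have "\<dots> = (\<Sum>p1<d1 * d1. \<Sum>p2<d2 * d2. \<Sum>q1<d1 * d1. \<Sum>q2<d2 * d2.
      cnj (G p1 p2) * chi d1 N1 $$ (p1, q1) * chi d2 N2 $$ (p2, q2) * G q1 q2)"
    unfolding D_def by (subst reindex2) (simp add: mult_ac)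
  finally have eq: "qf D (chi (d1 * d2) (tensor_channel d1 d2 N1 N2)) g = \<dots>" .
  have ipg: "Re (ip D g g) = (\<Sum>p1<d1 * d1. \<Sum>p2<d2 * d2. (cmod (G p1 p2))\<^sup>2)"
  proof -
    have "Re (ip D g g) = (\<Sum>y<D. (cmod (G (pi1 d1 d2 y) (pi2 d1 d2 y)))\<^sup>2)"
      unfolding ip_self by (simp add: gG)
    also have "\<dots> = (\<Sum>p1<d1 * d1. \<Sum>p2<d2 * d2. (cmod (G p1 p2))\<^sup>2)"
      unfolding D_def by (rule reindex)
    finally show ?thesis .
  qed
  have "Re (\<Sum>p1<d1 * d1. \<Sum>p2<d2 * d2. \<Sum>q1<d1 * d1. \<Sum>q2<d2 * d2.
      cnj (G p1 p2) * chi d1 N1 $$ (p1, q1) * chi d2 N2 $$ (p2, q2) * G q1 q2)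
      \<le> (opt_fid d1 N1)\<^sup>2 * (opt_fid d2 N2)\<^sup>2 * (\<Sum>p1<d1 * d1. \<Sum>p2<d2 * d2. (cmod (G p1 p2))\<^sup>2)"
    by (rule kron_ineq[OF chi_carrier chi_psd[OF qc_cpish[OF Q2] d0(2)]])
      (auto intro: opt_qf[OF qc_cpish[OF Q1] d0(1)] opt_qf[OF qc_cpish[OF Q2] d0(2)])
  thus ?thesis unfolding D_def[symmetric] eq ipg .
qed


definition prodm :: "nat \<Rightarrow> nat \<Rightarrow> complex mat \<Rightarrow> complex mat \<Rightarrow> complex mat" where
  "prodm d1 d2 A B = mat ((d1 * d2) * (d1 * d2)) ((d1 * d2) * (d1 * d2))
     (\<lambda>(y, x). A $$ (pi1 d1 d2 y, pi1 d1 d2 x) * B $$ (pi2 d1 d2 y, pi2 d1 d2 x))"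

lemma prodm_density:
  assumes r1: "density (d1 * d1) \<rho>1" and r2: "density (d2 * d2) \<rho>2"
  shows "density ((d1 * d2) * (d1 * d2)) (prodm d1 d2 \<rho>1 \<rho>2)"
proof -
  define m1 m2 where "m1 = d1 * d1" and "m2 = d2 * d2"
  obtain w1 where w1: "\<forall>x<m1. \<forall>y<m1. \<rho>1 $$ (x, y) = (\<Sum>i<m1. w1 i x * cnj (w1 i y))"
    using density_gram[OF r1] unfolding m1_def by blast
  obtain w2 where w2: "\<forall>x<m2. \<forall>y<m2. \<rho>2 $$ (x, y) = (\<Sum>i<m2. w2 i x * cnj (w2 i y))"
    using density_gram[OF r2] unfolding m2_def by blast
  define W where "W i y = w1 (i div m2) (pi1 d1 d2 y) * w2 (i mod m2) (pi2 d1 d2 y)" for i y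
  have Pc: "prodm d1 d2 \<rho>1 \<rho>2 \<in> carrier_mat ((d1 * d2) * (d1 * d2)) ((d1 * d2) * (d1 * d2))"
    unfolding prodm_def by simp
  have "psd (prodm d1 d2 \<rho>1 \<rho>2)"
  proof (rule gram_psd[OF Pc, where k="m1 * m2" and w=W])
    fix y x assume yx: "y < (d1 * d2) * (d1 * d2)" "x < (d1 * d2) * (d1 * d2)"
    note py = pi_facts[OF yx(1)] and px = pi_facts[OF yx(2)]
    have "(\<Sum>i<m1 * m2. W i y * cnj (W i x)) = (\<Sum>i1<m1. \<Sum>i2<m2. W (i1 * m2 + i2) y * cnj (W (i1 * m2 + i2) x))"
      by (rule sum_split)
    also have "\<dots> = (\<Sum>i1<m1. \<Sum>i2<m2. (w1 i1 (pi1 d1 d2 y) * cnj (w1 i1 (pi1 d1 d2 x))) * (w2 i2 (pi2 d1 d2 y) * cnj (w2 i2 (pi2 d1 d2 x))))"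
      unfolding W_def by (intro sum.cong refl) (simp add: mult_ac)
    also have "\<dots> = (\<Sum>i1<m1. w1 i1 (pi1 d1 d2 y) * cnj (w1 i1 (pi1 d1 d2 x))) * (\<Sum>i2<m2. w2 i2 (pi2 d1 d2 y) * cnj (w2 i2 (pi2 d1 d2 x)))"
      by (simp add: sum_product)
    also have "\<dots> = prodm d1 d2 \<rho>1 \<rho>2 $$ (y, x)"
      unfolding prodm_def using yx py px w1 w2 unfolding m1_def m2_def by simp
    finally show "prodm d1 d2 \<rho>1 \<rho>2 $$ (y, x) = (\<Sum>i<m1 * m2. W i y * cnj (W i x))" by simp
  qed
  moreover have "mtrace (prodm d1 d2 \<rho>1 \<rho>2) = 1"
  proof -
    have "mtrace (prodm d1 d2 \<rho>1 \<rho>2) = (\<Sum>y<(d1 * d2) * (d1 * d2). \<rho>1 $$ (pi1 d1 d2 y, pi1 d1 d2 y) * \<rho>2 $$ (pi2 d1 d2 y, pi2 d1 d2 y))"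
      unfolding mtrace_def prodm_def by simp
    also have "\<dots> = (\<Sum>p1<d1 * d1. \<Sum>p2<d2 * d2. \<rho>1 $$ (p1, p1) * \<rho>2 $$ (p2, p2))"
      by (rule reindex)
    also have "\<dots> = (\<Sum>p1<d1 * d1. \<rho>1 $$ (p1, p1)) * (\<Sum>p2<d2 * d2. \<rho>2 $$ (p2, p2))"
      by (simp add: sum_product)
    also have "\<dots> = mtrace \<rho>1 * mtrace \<rho>2"
      using r1 r2 unfolding mtrace_def density_def by auto
    also have "\<dots> = 1" using r1 r2 unfolding density_def by simp
    finally show ?thesis .
  qed
  ultimately show ?thesis using Pc unfolding density_def by simp
qed

lemma prodm_tr:
  assumes L2: "linmap d2 d2 N2" and r1: "\<rho>1 \<in> carrier_mat (d1 * d1) (d1 * d1)" and r2: "\<rho>2 \<in> carrier_mat (d2 * d2) (d2 * d2)"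
  shows "tr2 ((d1 * d2) * (d1 * d2)) (prodm d1 d2 \<rho>1 \<rho>2) (chi (d1 * d2) (tensor_channel d1 d2 N1 N2))
    = tr2 (d1 * d1) \<rho>1 (chi d1 N1) * tr2 (d2 * d2) \<rho>2 (chi d2 N2)"
proof -
  have "tr2 ((d1 * d2) * (d1 * d2)) (prodm d1 d2 \<rho>1 \<rho>2) (chi (d1 * d2) (tensor_channel d1 d2 N1 N2)) =
     (\<Sum>x<(d1 * d2) * (d1 * d2). \<Sum>y<(d1 * d2) * (d1 * d2).
        (\<rho>1 $$ (pi1 d1 d2 x, pi1 d1 d2 y) * chi d1 N1 $$ (pi1 d1 d2 y, pi1 d1 d2 x)) *
        (\<rho>2 $$ (pi2 d1 d2 x, pi2 d1 d2 y) * chi d2 N2 $$ (pi2 d1 d2 y, pi2 d1 d2 x)))"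
    unfolding tr2_def prodm_def by (intro sum.cong refl) (simp add: chi_tensor[OF L2] mult_ac)
  also have "\<dots> = (\<Sum>p1<d1 * d1. \<Sum>p2<d2 * d2. \<Sum>q1<d1 * d1. \<Sum>q2<d2 * d2.
        (\<rho>1 $$ (p1, q1) * chi d1 N1 $$ (q1, p1)) * (\<rho>2 $$ (p2, q2) * chi d2 N2 $$ (q2, p2)))"
    by (rule reindex2)
  also have "\<dots> = tr2 (d1 * d1) \<rho>1 (chi d1 N1) * tr2 (d2 * d2) \<rho>2 (chi d2 N2)"
    unfolding tr2_def by (simp add: sum_product)
  finally show ?thesis .
qed


theorem theorem2:
  fixes N1 N2 :: "complex mat \<Rightarrow> complex mat" and d1 d2 :: nat
  assumes "0 < d1" and "0 < d2"
    and "quantum_channel d1 d1 N1" and "quantum_channel d2 d2 N2"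
  shows "opt_fid (d1 * d2) (tensor_channel d1 d2 N1 N2) = opt_fid d1 N1 * opt_fid d2 N2"
proof -
  note d0 = assms(1,2) and Q1 = assms(3) and Q2 = assms(4)
  define N12 where "N12 = tensor_channel d1 d2 N1 N2"
  have cp1: "cpish d1 N1" and cp2: "cpish d2 N2" using qc_cpish Q1 Q2 by auto
  have L1: "linmap d1 d1 N1" and L2: "linmap d2 d2 N2" using qc_linmap Q1 Q2 by auto
  have D0: "d1 * d2 > 0" using d0 by simp
  have cp12: "cpish (d1 * d2) N12"
    unfolding cpish_def N12_def using tc_linmap[OF L1 L2] tc_psd[OF Q1 Q2] by blast
  define O1 O2 O12 where "O1 = opt_fid d1 N1" and "O2 = opt_fid d2 N2" and "O12 = opt_fid (d1 * d2) N12"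
  have O0: "O1 \<ge> 0" "O2 \<ge> 0" "O12 \<ge> 0"
    unfolding O1_def O2_def O12_def using opt_props(3) cp1 cp2 cp12 d0 D0 by auto
  have le: "O12 \<le> O1 * O2"
    unfolding O12_def
  proof (rule opt_props(2)[OF cp12 D0])
    fix \<rho> assume r: "density ((d1 * d2) * (d1 * d2)) \<rho>"
    obtain w where w: "\<forall>x<(d1 * d2) * (d1 * d2). \<forall>y<(d1 * d2) * (d1 * d2). \<rho> $$ (x, y) = (\<Sum>i<(d1 * d2) * (d1 * d2). w i x * cnj (w i y))"
      "(\<Sum>i<(d1 * d2) * (d1 * d2). Re (ip ((d1 * d2) * (d1 * d2)) (w i) (w i))) = 1"
      using density_gram[OF r] by blast
    have "Re (tr2 ((d1 * d2) * (d1 * d2)) \<rho> (chi (d1 * d2) N12)) = (\<Sum>i<(d1 * d2) * (d1 * d2). Re (qf ((d1 * d2) * (d1 * d2)) (chi (d1 * d2) N12) (w i)))"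
      using tr_gram[where n="(d1 * d2) * (d1 * d2)" and R=\<rho> and I="{..<(d1 * d2) * (d1 * d2)}" and w=w and M="chi (d1 * d2) N12"] w(1)
      by simp
    also have "\<dots> \<le> (\<Sum>i<(d1 * d2) * (d1 * d2). O1\<^sup>2 * O2\<^sup>2 * Re (ip ((d1 * d2) * (d1 * d2)) (w i) (w i)))"
      unfolding N12_def O1_def O2_def by (intro sum_mono chi12_qf[OF Q1 Q2 d0])
    also have "\<dots> = (O1 * O2)\<^sup>2" using w(2) by (simp add: sum_distrib_left[symmetric] power_mult_distrib)
    finally have "Re (tr2 ((d1 * d2) * (d1 * d2)) \<rho> (chi (d1 * d2) N12)) \<le> (O1 * O2)\<^sup>2" .
    hence "sqrt (Re (tr2 ((d1 * d2) * (d1 * d2)) \<rho> (chi (d1 * d2) N12))) \<le> sqrt ((O1 * O2)\<^sup>2)"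
      by (rule real_sqrt_le_mono)
    thus "sqrt (Re (tr2 ((d1 * d2) * (d1 * d2)) \<rho> (chi (d1 * d2) N12))) \<le> O1 * O2" using O0 by simp
  qed
  have key: "sqrt (Re (tr2 (d1 * d1) \<rho>1 (chi d1 N1))) * sqrt (Re (tr2 (d2 * d2) \<rho>2 (chi d2 N2))) \<le> O12"
    if r1: "density (d1 * d1) \<rho>1" and r2: "density (d2 * d2) \<rho>2" for \<rho>1 \<rho>2
  proof -
    have c: "\<rho>1 \<in> carrier_mat (d1 * d1) (d1 * d1)" "\<rho>2 \<in> carrier_mat (d2 * d2) (d2 * d2)"
      using r1 r2 unfolding density_def by auto
    note t1 = tr2_real[OF cp1 d0(1) r1] and t2 = tr2_real[OF cp2 d0(2) r2]
    have "Re (tr2 ((d1 * d2) * (d1 * d2)) (prodm d1 d2 \<rho>1 \<rho>2) (chi (d1 * d2) N12)) =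
        Re (tr2 (d1 * d1) \<rho>1 (chi d1 N1)) * Re (tr2 (d2 * d2) \<rho>2 (chi d2 N2))"
      unfolding N12_def prodm_tr[OF L2 c] using t1 t2 by simp
    moreover have "sqrt (Re (tr2 ((d1 * d2) * (d1 * d2)) (prodm d1 d2 \<rho>1 \<rho>2) (chi (d1 * d2) N12))) \<le> O12"
      unfolding O12_def by (rule opt_props(1)[OF cp12 D0 prodm_density[OF r1 r2]])
    ultimately show ?thesis by (simp add: real_sqrt_mult)
  qed
  have ge: "O1 * O2 \<le> O12"
  proof (cases "O2 = 0")
    case True
    thus ?thesis using O0 by simp
  next
    case False
    hence O2p: "O2 > 0" using O0 by simp
    have "O1 \<le> O12 / O2"
      unfolding O1_def
    proof (rule opt_props(2)[OF cp1 d0(1)])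
      fix \<rho>1 assume r1: "density (d1 * d1) \<rho>1"
      define a where "a = sqrt (Re (tr2 (d1 * d1) \<rho>1 (chi d1 N1)))"
      have a0: "a \<ge> 0" unfolding a_def using tr2_real[OF cp1 d0(1) r1] by simp
      show "sqrt (Re (tr2 (d1 * d1) \<rho>1 (chi d1 N1))) \<le> O12 / O2"
      proof (cases "a = 0")
        case True
        thus ?thesis using O0 O2p unfolding a_def by simp
      next
        case False
        hence ap: "a > 0" using a0 by simp
        have "O2 \<le> O12 / a"
          unfolding O2_def
        proof (rule opt_props(2)[OF cp2 d0(2)])
          fix \<rho>2 assume r2: "density (d2 * d2) \<rho>2"
          show "sqrt (Re (tr2 (d2 * d2) \<rho>2 (chi d2 N2))) \<le> O12 / a"
            using key[OF r1 r2] ap unfolding a_def[symmetric] by (simp add: pos_le_divide_eq mult.commute)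
        qed
        hence "a * O2 \<le> O12" using ap by (simp add: pos_le_divide_eq mult.commute)
        thus ?thesis using O2p unfolding a_def[symmetric] by (simp add: pos_le_divide_eq)
      qed
    qed
    thus ?thesis using O2p by (simp add: pos_le_divide_eq)
  qed
  show ?thesis using le ge unfolding O1_def O2_def O12_def N12_def by simp
qed


end
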